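(* Let $M,N,P$ be Banach manifolds, and let $h_M\colon M\to\mathbb R$ and $h_N\colon N\to\mathbb R$ be $C^\infty$ functions having $0$ as a regular value. Let $r\ge1$ and let $f_i\colon M\to N$ and $g_i\colon N\to P$, $i=1,2$, be $C^1$ maps such that $f_i(h_M^{-1}(0))\subseteq h_N^{-1}(0)$, $f_2=f_1+O(h_M^r)$, and $g_2=g_1+O(h_N^r)$. Then $g_2\circ f_2=g_1\circ f_1+O(h_M^r)$. Moreover, if $h_M(m)=0$ and $n\equiv f_i(m)$, then $$\operatorname{res}^r(g_2\circ f_2,g_1\circ f_1)(m)=\dot f_2(m)^r\,\operatorname{res}^r(g_2,g_1)(n)+T_ng_1\,\operatorname{res}^r(f_2,f_1)(m).$$
   Context: Order notation: for maps $f_1,f_2\colon M\to Q$ into a manifold $Q$ with $f_1=f_2$ on $h_M^{-1}(0)$ and $r\ge1$, write $f_2=f_1+O(h_M^r)$ if for every $m_0\in h_M^{-1}(0)$ there are a chart $\nu$ of $Q$ at $q_0=f_i(m_0)$ and a function $(\delta f)_\nu$ defined near $m_0$ and continuous at $m_0$ with $\nu(f_2(m))-\nu(f_1(m))=h_M(m)^r(\delta f)_\nu(m)$ for all $m$ near $m_0$. The vector $(\delta f)_\nu(m_0)$ transforms as a tangent vector in $T_{q_0}Q$ under change of chart, and this tangent vector is the $r$-residual $\operatorname{res}^r(f_2,f_1)(m_0)$, defined for $m_0\in h_M^{-1}(0)$ (similarly with $h_N$ for maps on $N$). For a $C^1$ map $f\colon M\to N$ with $f(h_M^{-1}(0))\subseteq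 h_N^{-1}(0)$, the function $\dot f\colon h_M^{-1}(0)\to\mathbb R$ is defined by $d(h_N\circ f)(m)=\dot f(m)\,dh_M(m)$. *)

theory Defs
  imports "HOL-Analysis.Analysis"
begin

text \<open>A k-linear bounded map is represented as a function on sequences of vectors
  that only depends on the first k entries.\<close>
definition multilin_bounded :: "nat \<Rightarrow> ((nat \<Rightarrow> 'e::real_normed_vector) \<Rightarrow> 'f::real_normed_vector) \<Rightarrow> bool" where
  "multilin_bounded k L \<longleftrightarrow>
     (\<forall>vs ws. (\<forall>i<k. vs i = ws i) \<longrightarrow> L vs = L ws) \<and>
     (\<forall>i<k. \<forall>vs u w a b. L (vs(i := a *\<^sub>R u + b *\<^sub>R w)) = a *\<^sub>R L (vs(i := u)) + b *\<^sub>R L (vs(i := w))) \<and>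
     (\<exists>C. \<forall>vs. norm (L vs) \<le> C * (\<Prod>i<k. norm (vs i)))"

text \<open>A tower of Frechet derivatives: D k x is the k-th derivative at x, and each
  level is Frechet differentiable (in the operator norm) with derivative the next level.\<close>
definition deriv_tower :: "'e::real_normed_vector set \<Rightarrow> ('e \<Rightarrow> 'f::real_normed_vector) \<Rightarrow> (nat \<Rightarrow> 'e \<Rightarrow> (nat \<Rightarrow> 'e) \<Rightarrow> 'f) \<Rightarrow> bool" where
  "deriv_tower S F D \<longleftrightarrow>
     (\<forall>x\<in>S. \<forall>vs. D 0 x vs = F x) \<and>
     (\<forall>k. \<forall>x\<in>S. multilin_bounded k (D k x)) \<and>
     (\<forall>k. \<forall>x\<in>S. \<forall>\<epsilon>>0. \<exists>\<delta>>0. \<forall>y\<in>S. norm (y - x) < \<delta> \<longrightarrow>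
        (\<forall>vs. (\<forall>i<k. norm (vs i) \<le> 1) \<longrightarrow>
           norm (D k y vs - D k x vs - D (Suc k) x (vs(k := y - x))) \<le> \<epsilon> * norm (y - x)))"

definition smooth_on :: "'e::real_normed_vector set \<Rightarrow> ('e \<Rightarrow> 'f::real_normed_vector) \<Rightarrow> bool" where
  "smooth_on S F \<longleftrightarrow> open S \<and> (\<exists>D. deriv_tower S F D)"

definition C1_on :: "'e::real_normed_vector set \<Rightarrow> ('e \<Rightarrow> 'f::real_normed_vector) \<Rightarrow> bool" where
  "C1_on S F \<longleftrightarrow> open S \<and> (\<exists>D :: 'e \<Rightarrow> ('e \<Rightarrow>\<^sub>L 'f).
      continuous_on S D \<and> (\<forall>x\<in>S. (F has_derivative blinfun_apply (D x)) (at x)))"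

definition is_chart :: "'m::topological_space set \<times> ('m \<Rightarrow> 'e::banach) \<Rightarrow> bool" where
  "is_chart c \<longleftrightarrow> (case c of (U, \<phi>) \<Rightarrow>
     open U \<and> open (\<phi> ` U) \<and> inj_on \<phi> U \<and> continuous_on U \<phi> \<and> continuous_on (\<phi> ` U) (inv_into U \<phi>))"

definition smooth_compat :: "'m::topological_space set \<times> ('m \<Rightarrow> 'e::banach) \<Rightarrow> 'm set \<times> ('m \<Rightarrow> 'e) \<Rightarrow> bool" where
  "smooth_compat c d \<longleftrightarrow> (case c of (U, \<phi>) \<Rightarrow> case d of (V, \<psi>) \<Rightarrow>
     smooth_on (\<phi> ` (U \<inter> V)) (\<psi> \<circ> inv_into U \<phi>) \<and> smooth_on (\<psi> ` (U \<inter> V)) (\<phi> \<circ> inv_into V \<psi>))"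

definition banach_manifold :: "('m::t2_space set \<times> ('m \<Rightarrow> 'e::banach)) set \<Rightarrow> bool" where
  "banach_manifold A \<longleftrightarrow> (\<forall>c\<in>A. is_chart c) \<and> (\<forall>x. \<exists>c\<in>A. x \<in> fst c) \<and>
     (\<forall>c\<in>A. \<forall>d\<in>A. smooth_compat c d)"

text \<open>Charts of the maximal atlas determined by A.\<close>
definition chart_of :: "('m::topological_space set \<times> ('m \<Rightarrow> 'e::banach)) set \<Rightarrow> 'm set \<times> ('m \<Rightarrow> 'e) \<Rightarrow> bool" where
  "chart_of A c \<longleftrightarrow> is_chart c \<and> (\<forall>d\<in>A. smooth_compat c d)"

definition smooth_fun :: "('m::topological_space set \<times> ('m \<Rightarrow> 'e::banach)) set \<Rightarrow> ('m \<Rightarrow> real) \<Rightarrow> bool" where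
  "smooth_fun A h \<longleftrightarrow> (\<forall>(U, \<phi>)\<in>A. smooth_on (\<phi> ` U) (h \<circ> inv_into U \<phi>))"

definition C1_map :: "('m::topological_space set \<times> ('m \<Rightarrow> 'e::banach)) set \<Rightarrow>
    ('n::topological_space set \<times> ('n \<Rightarrow> 'f::banach)) set \<Rightarrow> ('m \<Rightarrow> 'n) \<Rightarrow> bool" where
  "C1_map A B f \<longleftrightarrow> continuous_on UNIV f \<and>
     (\<forall>(U, \<phi>)\<in>A. \<forall>(V, \<psi>)\<in>B. C1_on (\<phi> ` (U \<inter> f -` V)) (\<psi> \<circ> f \<circ> inv_into U \<phi>))"

text \<open>0 is a regular value of h: the differential of h is nonzero (hence onto \<real>) on h^-1(0).\<close>
definition regular_value0 :: "('m::topological_space set \<times> ('m \<Rightarrow> 'e::banach)) set \<Rightarrow> ('m \<Rightarrow> real) \<Rightarrow> bool" where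
  "regular_value0 A h \<longleftrightarrow> (\<forall>m. h m = 0 \<longrightarrow> (\<forall>(U, \<phi>)\<in>A. m \<in> U \<longrightarrow>
      frechet_derivative (h \<circ> inv_into U \<phi>) (at (\<phi> m)) \<noteq> (\<lambda>_. 0)))"

text \<open>f2 = f1 + O(h^r): representation of the difference in a chart (V, psi) near m0.\<close>
definition O_rep :: "('m::t2_space \<Rightarrow> real) \<Rightarrow> nat \<Rightarrow> 'q set \<times> ('q \<Rightarrow> 'g::real_normed_vector)
    \<Rightarrow> ('m \<Rightarrow> 'q) \<Rightarrow> ('m \<Rightarrow> 'q) \<Rightarrow> 'm \<Rightarrow> ('m \<Rightarrow> 'g) \<Rightarrow> bool" where
  "O_rep h r c f2 f1 m0 \<delta> \<longleftrightarrow> (case c of (V, \<psi>) \<Rightarrow>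
     continuous (at m0) \<delta> \<and>
     (\<exists>W. open W \<and> m0 \<in> W \<and>
        (\<forall>m\<in>W. f1 m \<in> V \<and> f2 m \<in> V \<and> \<psi> (f2 m) - \<psi> (f1 m) = h m ^ r *\<^sub>R \<delta> m)))"

definition bigO :: "('m::t2_space \<Rightarrow> real) \<Rightarrow> nat \<Rightarrow>
    ('q::topological_space set \<times> ('q \<Rightarrow> 'g::banach)) set \<Rightarrow> ('m \<Rightarrow> 'q) \<Rightarrow> ('m \<Rightarrow> 'q) \<Rightarrow> bool" where
  "bigO h r B f2 f1 \<longleftrightarrow> (\<forall>m. h m = 0 \<longrightarrow> f2 m = f1 m) \<and>
     (\<forall>m0. h m0 = 0 \<longrightarrow> (\<exists>c \<delta>. chart_of B c \<and> f1 m0 \<in> fst c \<and> O_rep h r c f2 f1 m0 \<delta>))"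

text \<open>The r-residual at m0, expressed in the chart c: the value (delta f)_c(m0).\<close>
definition res_rep :: "('m::t2_space \<Rightarrow> real) \<Rightarrow> nat \<Rightarrow> 'q set \<times> ('q \<Rightarrow> 'g::real_normed_vector)
    \<Rightarrow> ('m \<Rightarrow> 'q) \<Rightarrow> ('m \<Rightarrow> 'q) \<Rightarrow> 'm \<Rightarrow> 'g" where
  "res_rep h r c f2 f1 m0 = (THE v. \<exists>\<delta>. O_rep h r c f2 f1 m0 \<delta> \<and> \<delta> m0 = v)"

text \<open>f-dot: d(h_N o f)(m) = fdot(m) dh_M(m), computed in charts of M.\<close>
definition fdot :: "('m::topological_space set \<times> ('m \<Rightarrow> 'e::banach)) set \<Rightarrow> ('m \<Rightarrow> real) \<Rightarrow>
    ('n \<Rightarrow> real) \<Rightarrow> ('m \<Rightarrow> 'n) \<Rightarrow> 'm \<Rightarrow> real" where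
  "fdot A hM hN f m = (THE a. \<forall>(U, \<phi>)\<in>A. m \<in> U \<longrightarrow>
      frechet_derivative (hN \<circ> f \<circ> inv_into U \<phi>) (at (\<phi> m)) =
      (\<lambda>v. a * frechet_derivative (hM \<circ> inv_into U \<phi>) (at (\<phi> m)) v))"

end

theory Submission
  imports Defs
begin


definition C1x :: "'a::real_normed_vector set \<Rightarrow> ('a \<Rightarrow> 'b::real_normed_vector) \<Rightarrow> ('a \<Rightarrow> 'a \<Rightarrow> 'b) \<Rightarrow> bool" where
"C1x S G G' \<longleftrightarrow> open S \<and> (\<forall>x\<in>S. (G has_derivative G' x) (at x)) \<and>
   (\<forall>x\<in>S. \<forall>e>0. \<exists>d>0. \<forall>y\<in>S. dist y x < d \<longrightarrow> (\<forall>w. norm (G' y w - G' x w) \<le> e * norm w))"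

lemma RL:
  assumes C: "C1x S G G'" and y0: "y0 \<in> S"
   and a: "(a \<longlongrightarrow> y0) F" and b: "(b \<longlongrightarrow> y0) F"
   and v: "((\<lambda>m. (1 / s m) *\<^sub>R (b m - a m)) \<longlongrightarrow> v) F"
  shows "((\<lambda>m. (1 / s m) *\<^sub>R (G (b m) - G (a m))) \<longlongrightarrow> G' y0 v) F"
proof -
  have openS: "open S" and der: "\<And>x. x\<in>S \<Longrightarrow> (G has_derivative G' x) (at x)"
    and cont: "\<And>x e. x\<in>S \<Longrightarrow> e>0 \<Longrightarrow> \<exists>d>0. \<forall>y\<in>S. dist y x < d \<longrightarrow> (\<forall>w. norm (G' y w - G' x w) \<le> e * norm w)"
    using C unfolding C1x_def by blast+
  have bl: "bounded_linear (G' y0)" using der[OF y0] has_derivative_bounded_linear by blast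
  have lim2: "((\<lambda>m. G' y0 ((1 / s m) *\<^sub>R (b m - a m))) \<longlongrightarrow> G' y0 v) F"
    using bounded_linear.tendsto[OF bl v] .
  have "((\<lambda>m. (1 / s m) *\<^sub>R (G (b m) - G (a m)) - G' y0 ((1 / s m) *\<^sub>R (b m - a m))) \<longlongrightarrow> 0) F"
    unfolding tendsto_iff
  proof (intro allI impI)
    fix e :: real assume e: "e > 0"
    define K where "K = norm v + 1"
    have K: "K > 0" unfolding K_def by (simp add: add_nonneg_pos)
    define e' where "e' = e / (2*K)"
    have e': "e' > 0" using e K unfolding e'_def by simp
    obtain d where d: "d > 0" "\<forall>y\<in>S. dist y y0 < d \<longrightarrow> (\<forall>w. norm (G' y w - G' y0 w) \<le> e' * norm w)"
      using cont[OF y0 e'] by blast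
    obtain d2 where d2: "d2 > 0" "ball y0 d2 \<subseteq> S" using openS y0 open_contains_ball by blast
    define d3 where "d3 = min d d2"
    have d3: "d3 > 0" using d d2 unfolding d3_def by simp
    have ev1: "\<forall>\<^sub>F m in F. a m \<in> ball y0 d3" using tendstoD[OF a d3]
      by (rule eventually_mono) (simp add: dist_commute)
    have ev2: "\<forall>\<^sub>F m in F. b m \<in> ball y0 d3" using tendstoD[OF b d3]
      by (rule eventually_mono) (simp add: dist_commute)
    have ev3: "\<forall>\<^sub>F m in F. dist ((1 / s m) *\<^sub>R (b m - a m)) v < 1" using tendstoD[OF v zero_less_one] .
    show "\<forall>\<^sub>F m in F. dist ((1 / s m) *\<^sub>R (G (b m) - G (a m)) - G' y0 ((1 / s m) *\<^sub>R (b m - a m))) 0 < e"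
      using ev1 ev2 ev3
    proof eventually_elim
      case (elim m)
      have sub: "ball y0 d3 \<subseteq> S" using d2 unfolding d3_def by auto
      have seg: "a m + t *\<^sub>R (b m - a m) \<in> ball y0 d3" if "t \<in> {0..1}" for t
      proof -
        have "a m + t *\<^sub>R (b m - a m) = (1 - t) *\<^sub>R a m + t *\<^sub>R b m" by (simp add: algebra_simps)
        then show ?thesis using convex_ball[of y0 d3] elim that unfolding convex_def by auto
      qed
      have hd: "(G has_derivative G' x) (at x within ball y0 d3)" if "x \<in> ball y0 d3" for x
        using der[of x] sub that has_derivative_at_withinI by blast
      have on: "onorm (G' x - G' y0) \<le> e'" if "x \<in> ball y0 d3" for x
      proof (rule onorm_bound)
        show "0 \<le> e'" using e' by simp
        fix w
        have "dist x y0 < d" using that unfolding d3_def by (simp add: dist_commute)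
        moreover have "x \<in> S" using sub that by auto
        ultimately show "norm ((G' x - G' y0) w) \<le> e' * norm w" using d(2) by (simp add: fun_diff_def)
      qed
      have y0b: "y0 \<in> ball y0 d3" using d3 by simp
      have main: "norm (G (b m) - G (a m) - G' y0 (b m - a m)) \<le> norm (b m - a m) * e'"
        by (rule differentiable_bound_linearization[OF seg hd on y0b])
      have eq: "(1 / s m) *\<^sub>R (G (b m) - G (a m)) - G' y0 ((1 / s m) *\<^sub>R (b m - a m))
          = (1 / s m) *\<^sub>R (G (b m) - G (a m) - G' y0 (b m - a m))"
        by (simp add: linear_scale[OF bounded_linear.linear[OF bl]] linear_diff[OF bounded_linear.linear[OF bl]] scaleR_diff_right)
      have nv: "norm ((1 / s m) *\<^sub>R (b m - a m)) < K"
        using elim(3) norm_triangle_ineq2[of "(1 / s m) *\<^sub>R (b m - a m)" v] unfolding K_def dist_norm by linarith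
      have "norm ((1 / s m) *\<^sub>R (G (b m) - G (a m) - G' y0 (b m - a m)))
           = \<bar>1 / s m\<bar> * norm (G (b m) - G (a m) - G' y0 (b m - a m))" by simp
      also have "\<dots> \<le> \<bar>1 / s m\<bar> * (norm (b m - a m) * e')" by (rule mult_left_mono[OF main]) simp
      also have "\<dots> = norm ((1 / s m) *\<^sub>R (b m - a m)) * e'" by simp
      also have "\<dots> \<le> K * e'" using mult_right_mono[OF less_imp_le[OF nv], of e'] e' by linarith
      also have "\<dots> < e" using K e unfolding e'_def by simp
      finally show ?case using eq by (simp add: dist_norm)
    qed
  qed
  from tendsto_add[OF this lim2] show ?thesis by simp
qed



lemma lin_unit_bound:
  assumes "linear A" "\<And>w. norm w \<le> 1 \<Longrightarrow> norm (A w) \<le> c"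
  shows "norm (A w) \<le> c * norm w"
proof (cases "w = 0")
  case True then show ?thesis using linear_0[OF assms(1)] by simp
next
  case False
  have n: "norm ((1 / norm w) *\<^sub>R w) \<le> 1" using False by simp
  have "A w = norm w *\<^sub>R A ((1 / norm w) *\<^sub>R w)"
    using False by (simp add: linear_scale[OF assms(1)])
  then have "norm (A w) = norm w * norm (A ((1 / norm w) *\<^sub>R w))" by simp
  also have "\<dots> \<le> norm w * c" using assms(2)[OF n] by (simp add: mult_left_mono)
  finally show ?thesis by (simp add: mult.commute)
qed

lemma C1_on_C1x:
  assumes "C1_on S F"
  shows "\<exists>F'. C1x S F F'"
proof -
  obtain D :: "_ \<Rightarrow> _ \<Rightarrow>\<^sub>L _" where o: "open S" and c: "continuous_on S D"
    and d: "\<forall>x\<in>S. (F has_derivative blinfun_apply (D x)) (at x)"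
    using assms unfolding C1_on_def by blast
  have "C1x S F (\<lambda>x. blinfun_apply (D x))"
    unfolding C1x_def
  proof (intro conjI o d ballI allI impI)
    fix x e assume x: "x \<in> S" and e: "(e::real) > 0"
    obtain d where d: "d > 0" "\<forall>y\<in>S. dist y x < d \<longrightarrow> dist (D y) (D x) < e"
      using c x e unfolding continuous_on_iff by blast
    show "\<exists>d>0. \<forall>y\<in>S. dist y x < d \<longrightarrow> (\<forall>w. norm (blinfun_apply (D y) w - blinfun_apply (D x) w) \<le> e * norm w)"
    proof (intro exI conjI ballI impI allI)
      show "d > 0" by fact
      fix y w assume y: "y \<in> S" "dist y x < d"
      have "norm (blinfun_apply (D y) w - blinfun_apply (D x) w) = norm (blinfun_apply (D y - D x) w)"
        by (simp add: blinfun.diff_left)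
      also have "\<dots> \<le> norm (D y - D x) * norm w" by (rule norm_blinfun)
      also have "\<dots> \<le> e * norm w" using d y by (simp add: dist_norm mult_right_mono less_imp_le)
      finally show "norm (blinfun_apply (D y) w - blinfun_apply (D x) w) \<le> e * norm w" .
    qed
  qed
  then show ?thesis by blast
qed

lemma smooth_on_C1x:
  assumes "smooth_on S F" and that: "deriv_tower S F D'"
  shows "C1x S F (\<lambda>x w. D' 1 x (\<lambda>_. w))"
proof -
  have oS: "open S" using assms unfolding smooth_on_def by blast
  note T = that[unfolded deriv_tower_def]
  have D0: "\<And>x vs. x \<in> S \<Longrightarrow> D' 0 x vs = F x" using T[THEN conjunct1] by blast
  have MLB: "\<And>k x. x \<in> S \<Longrightarrow> multilin_bounded k (D' k x)" using T[THEN conjunct2, THEN conjunct1] by blast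
  have DIF: "\<And>k x e. x \<in> S \<Longrightarrow> e > 0 \<Longrightarrow> \<exists>\<delta>>0. \<forall>y\<in>S. norm (y - x) < \<delta> \<longrightarrow>
        (\<forall>vs. (\<forall>i<k. norm (vs i) \<le> 1) \<longrightarrow>
           norm (D' k y vs - D' k x vs - D' (Suc k) x (vs(k := y - x))) \<le> e * norm (y - x))"
    using T[THEN conjunct2, THEN conjunct2] by blast
  define L where "L x w = D' 1 x (\<lambda>_. w)" for x w
  have dep: "D' 1 x vs = L x (vs 0)" if "x \<in> S" for x vs
  proof -
    have "\<forall>vs ws. (\<forall>i<1. vs i = ws i) \<longrightarrow> D' 1 x vs = D' 1 x ws"
      using MLB[OF that, of 1, unfolded multilin_bounded_def, THEN conjunct1] .
    then show ?thesis unfolding L_def by (metis less_one)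
  qed
  have lin: "D' 1 x (vs(0 := a *\<^sub>R u + b *\<^sub>R w)) = a *\<^sub>R D' 1 x (vs(0 := u)) + b *\<^sub>R D' 1 x (vs(0 := w))"
    if "x \<in> S" for x vs a b u w
    using MLB[OF that, of 1, unfolded multilin_bounded_def, THEN conjunct2, THEN conjunct1, rule_format, of 0] by simp
  have Llin: "L x (a *\<^sub>R u + b *\<^sub>R w) = a *\<^sub>R L x u + b *\<^sub>R L x w" if "x \<in> S" for x a b u w
  proof -
    have e: "D' 1 x ((\<lambda>_. 0)(0 := z)) = L x z" for z using dep[OF that, of "(\<lambda>_. 0)(0 := z)"] by simp
    show ?thesis using lin[OF that, of "\<lambda>_. 0" a u b w] unfolding e .
  qed
  have bl: "bounded_linear (L x)" if x: "x \<in> S" for x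
  proof -
    obtain C where C: "\<forall>vs. norm (D' 1 x vs) \<le> C * (\<Prod>i<1. norm (vs i))"
      using MLB[OF x, of 1, unfolded multilin_bounded_def, THEN conjunct2, THEN conjunct2] by blast
    show ?thesis
    proof (rule bounded_linear_intro[where K=C])
      fix u w show "L x (u + w) = L x u + L x w" using Llin[OF x, of 1 u 1 w] by simp
    next
      fix r u show "L x (r *\<^sub>R u) = r *\<^sub>R L x u" using Llin[OF x, of r u 0 0] by simp
    next
      fix u show "norm (L x u) \<le> norm u * C" using C[rule_format, of "\<lambda>_. u"] unfolding L_def
        by (simp add: mult.commute)
    qed
  qed
  have der: "(F has_derivative L x) (at x)" if x: "x \<in> S" for x
    unfolding has_derivative_at_alt
  proof (intro conjI bl[OF x] allI impI)
    fix e :: real assume e: "e > 0"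
    obtain \<delta> where \<delta>: "\<delta> > 0" "\<forall>y\<in>S. norm (y - x) < \<delta> \<longrightarrow>
        (\<forall>vs. (\<forall>i<0. norm (vs i) \<le> 1) \<longrightarrow>
           norm (D' 0 y vs - D' 0 x vs - D' (Suc 0) x (vs(0 := y - x))) \<le> e * norm (y - x))"
      using DIF[OF x e, of 0] by blast
    obtain d2 where d2: "d2 > 0" "ball x d2 \<subseteq> S" using oS x open_contains_ball by blast
    show "\<exists>d>0. \<forall>y. norm (y - x) < d \<longrightarrow> norm (F y - F x - L x (y - x)) \<le> e * norm (y - x)"
    proof (intro exI[of _ "min \<delta> d2"] conjI allI impI)
      show "min \<delta> d2 > 0" using \<delta> d2 by simp
      fix y assume y: "norm (y - x) < min \<delta> d2"
      have yS: "y \<in> S" using y d2 by (auto simp: dist_norm norm_minus_commute)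
      have "norm (D' 0 y (\<lambda>_. 0) - D' 0 x (\<lambda>_. 0) - D' (Suc 0) x ((\<lambda>_. 0)(0 := y - x))) \<le> e * norm (y - x)"
        using \<delta>(2) yS y by (metis min_less_iff_conj not_less0)
      then show "norm (F y - F x - L x (y - x)) \<le> e * norm (y - x)"
        using D0[OF yS] D0[OF x] dep[OF x] by simp
    qed
  qed
  have cont: "\<exists>d>0. \<forall>y\<in>S. dist y x < d \<longrightarrow> (\<forall>w. norm (L y w - L x w) \<le> e * norm w)"
    if x: "x \<in> S" and e: "e > 0" for x e
  proof -
    obtain \<delta> where \<delta>: "\<delta> > 0" "\<forall>y\<in>S. norm (y - x) < \<delta> \<longrightarrow>
        (\<forall>vs. (\<forall>i<1. norm (vs i) \<le> 1) \<longrightarrow>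
           norm (D' 1 y vs - D' 1 x vs - D' (Suc 1) x (vs(1 := y - x))) \<le> 1 * norm (y - x))"
      using DIF[OF x zero_less_one, of 1] by blast
    obtain C2 where C2: "\<forall>vs. norm (D' 2 x vs) \<le> C2 * (\<Prod>i<2. norm (vs i))"
      using MLB[OF x, of 2] unfolding multilin_bounded_def by blast
    define K where "K = 1 + \<bar>C2\<bar>"
    have K: "K > 0" unfolding K_def by simp
    have unit: "norm (L y w - L x w) \<le> K * norm (y - x)"
      if y: "y \<in> S" "norm (y - x) < \<delta>" and w: "norm w \<le> 1" for y w
    proof -
      let ?vs = "\<lambda>_::nat. w"
      have 1: "norm (D' 1 y ?vs - D' 1 x ?vs - D' 2 x (?vs(1 := y - x))) \<le> norm (y - x)"
        using \<delta>(2) y w by (simp add: numeral_2_eq_2)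
      have p: "(\<Prod>i<2. norm ((?vs(1 := y - x)) i)) = norm w * norm (y - x)"
        by (simp add: numeral_2_eq_2 lessThan_Suc)
      have "norm (D' 2 x (?vs(1 := y - x))) \<le> C2 * (norm w * norm (y - x))"
        using C2[rule_format, of "?vs(1 := y - x)"] p by simp
      also have "\<dots> \<le> \<bar>C2\<bar> * (norm w * norm (y - x))" by (rule mult_right_mono) auto
      also have "\<dots> \<le> \<bar>C2\<bar> * norm (y - x)" using mult_left_mono[OF mult_right_mono[OF w norm_ge_zero[of "y-x"]], of "\<bar>C2\<bar>"] by simp
      finally have 2: "norm (D' 2 x (?vs(1 := y - x))) \<le> \<bar>C2\<bar> * norm (y - x)" .
      have "norm (D' 1 y ?vs - D' 1 x ?vs) \<le> norm (D' 1 y ?vs - D' 1 x ?vs - D' 2 x (?vs(1 := y - x))) + norm (D' 2 x (?vs(1 := y - x)))"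
        using norm_triangle_ineq[of "D' 1 y ?vs - D' 1 x ?vs - D' 2 x (?vs(1 := y - x))" "D' 2 x (?vs(1 := y - x))"] by simp
      then show ?thesis using 1 2 unfolding L_def K_def by (simp add: algebra_simps)
    qed
    show ?thesis
    proof (intro exI[of _ "min \<delta> (e / K)"] conjI ballI impI allI)
      show "min \<delta> (e / K) > 0" using \<delta> e K by simp
      fix y w assume y: "y \<in> S" "dist y x < min \<delta> (e / K)"
      have ny: "norm (y - x) < \<delta>" "norm (y - x) < e / K" using y by (auto simp: dist_norm)
      have linA: "linear (\<lambda>w. L y w - L x w)"
        using bl[OF y(1)] bl[OF x] by (intro linear_compose_sub bounded_linear.linear)
      have "norm (L y w - L x w) \<le> (K * norm (y - x)) * norm w"
        by (rule lin_unit_bound[OF linA]) (use unit[OF y(1) ny(1)] in auto)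
      also have "\<dots> \<le> e * norm w"
      proof (rule mult_right_mono)
        show "K * norm (y - x) \<le> e" using ny(2) K by (simp add: field_simps)
      qed simp
      finally show "norm (L y w - L x w) \<le> e * norm w" .
    qed
  qed
  show ?thesis unfolding C1x_def L_def[symmetric] using oS der cont by blast
qed

lemma smooth_on_C1x': "smooth_on S F \<Longrightarrow> \<exists>F'. C1x S F F'"
  using smooth_on_C1x unfolding smooth_on_def by blast



lemma LINE:
  fixes H :: "'a::real_normed_vector \<Rightarrow> real"
  assumes C: "C1x S H H'" and x0: "x0 \<in> S" and H0: "H x0 = 0" and v: "H' x0 v = 1"
  shows "\<exists>d>0. \<exists>t. \<forall>x. norm (x - x0) < d \<longrightarrow> x \<in> S \<and> x + t x *\<^sub>R v \<in> S \<and>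
            H (x + t x *\<^sub>R v) = 0 \<and> \<bar>t x\<bar> \<le> 2 * \<bar>H x\<bar> \<and> (H x \<noteq> 0 \<longrightarrow> t x \<noteq> 0)"
proof -
  have openS: "open S" and der: "\<And>x. x\<in>S \<Longrightarrow> (H has_derivative H' x) (at x)"
    and cont: "\<And>x e. x\<in>S \<Longrightarrow> e>0 \<Longrightarrow> \<exists>d>0. \<forall>y\<in>S. dist y x < d \<longrightarrow> (\<forall>w. norm (H' y w - H' x w) \<le> e * norm w)"
    using C unfolding C1x_def by blast+
  have bl: "\<And>x. x \<in> S \<Longrightarrow> bounded_linear (H' x)" using der has_derivative_bounded_linear by blast
  have vnz: "v \<noteq> 0"
  proof
    assume "v = 0"
    then have "H' x0 v = 0" using linear_0[OF bounded_linear.linear[OF bl[OF x0]]] by simp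
    then show False using v by simp
  qed
  define nv where "nv = norm v"
  have nv: "nv > 0" using vnz unfolding nv_def by simp
  obtain d1 where d1: "d1 > 0" "\<forall>y\<in>S. dist y x0 < d1 \<longrightarrow> (\<forall>w. norm (H' y w - H' x0 w) \<le> (1 / (2 * nv)) * norm w)"
    using cont[OF x0, of "1 / (2 * nv)"] nv by auto
  obtain d2 where d2: "d2 > 0" "ball x0 d2 \<subseteq> S" using openS x0 open_contains_ball by blast
  define r where "r = min d1 d2"
  have r: "r > 0" using d1 d2 unfolding r_def by simp
  have inS: "y \<in> S" if "y \<in> ball x0 r" for y using that d2 unfolding r_def by auto
  have dbd: "1 / 2 \<le> H' y v" if y: "y \<in> ball x0 r" for y
  proof -
    have "dist y x0 < d1" using y unfolding r_def by (simp add: dist_commute)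
    then have "norm (H' y v - H' x0 v) \<le> (1 / (2 * nv)) * norm v" using d1(2) inS[OF y] by blast
    also have "\<dots> = 1 / 2" using nv unfolding nv_def by simp
    finally have "norm (H' y v - H' x0 v) \<le> 1 / 2" .
    then have a: "\<bar>H' y v - 1\<bar> \<le> 1 / 2" using v by (simp only: real_norm_def)
    show ?thesis using abs_le_D2[OF a] by simp
  qed
  define T where "T = r / (2 * nv)"
  have T: "T > 0" using r nv unfolding T_def by simp
  have icH: "continuous (at x0) H" using der[OF x0] has_derivative_continuous by blast
  obtain d3 where d3: "d3 > 0" "\<forall>x'. dist x' x0 < d3 \<longrightarrow> dist (H x') (H x0) < T / 2"
    using icH[unfolded continuous_at_eps_delta] T by (metis half_gt_zero)
  define d where "d = min (r / 2) d3"
  have d: "d > 0" using r d3 unfolding d_def by simp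
  have key: "\<exists>t. x + t *\<^sub>R v \<in> S \<and> H (x + t *\<^sub>R v) = 0 \<and> \<bar>t\<bar> \<le> 2 * \<bar>H x\<bar> \<and> (H x \<noteq> 0 \<longrightarrow> t \<noteq> 0)"
    if x: "norm (x - x0) < d" for x
  proof -
    define g where "g t = H (x + t *\<^sub>R v)" for t
    have inb: "x + t *\<^sub>R v \<in> ball x0 r" if "\<bar>t\<bar> \<le> T" for t
    proof -
      have "norm (t *\<^sub>R v) = \<bar>t\<bar> * nv" unfolding nv_def by simp
      also have "\<dots> \<le> T * nv" using that nv by (simp add: mult_right_mono)
      also have "\<dots> = r / 2" unfolding T_def using nv by simp
      finally have 1: "norm (t *\<^sub>R v) \<le> r / 2" .
      have 2: "norm (x - x0) < r / 2" using x unfolding d_def by simp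
      have "dist x0 (x + t *\<^sub>R v) = norm ((x - x0) + t *\<^sub>R v)" by (simp add: dist_norm norm_minus_commute algebra_simps)
      also have "\<dots> \<le> norm (x - x0) + norm (t *\<^sub>R v)" by (rule norm_triangle_ineq)
      finally show ?thesis using 1 2 by simp
    qed
    have gder: "DERIV g t :> H' (x + t *\<^sub>R v) v" if "\<bar>t\<bar> \<le> T" for t
    proof -
      have l: "((\<lambda>t. x + t *\<^sub>R v) has_derivative (\<lambda>t. t *\<^sub>R v)) (at t)"
        by (auto intro!: derivative_eq_intros)
      have "((H \<circ> (\<lambda>t. x + t *\<^sub>R v)) has_derivative (H' (x + t *\<^sub>R v) \<circ> (\<lambda>t. t *\<^sub>R v))) (at t)"
        using diff_chain_at[OF l der[OF inS[OF inb[OF that]]]] by simp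
      then show ?thesis unfolding g_def[abs_def] o_def
        by (rule has_derivative_imp_has_field_derivative)
           (simp add: linear_scale[OF bounded_linear.linear[OF bl[OF inS[OF inb[OF that]]]]])
    qed
    have mono: "(u - s) / 2 \<le> g u - g s" if st: "-T \<le> s" "s < u" "u \<le> T" for s u
    proof -
      obtain z where z: "s < z" "z < u" "g u - g s = (u - s) * H' (x + z *\<^sub>R v) v"
        proof -
        have "\<exists>z>s. z < u \<and> g u - g s = (u - s) * H' (x + z *\<^sub>R v) v"
          by (rule MVT2[OF \<open>s < u\<close>]) (rule gder, use st in auto)
        then show ?thesis using that by blast
      qed
      have "1 / 2 \<le> H' (x + z *\<^sub>R v) v" using dbd inb z st by simp
      then have "(u - s) * (1/2) \<le> (u - s) * H' (x + z *\<^sub>R v) v" using st by (simp add: mult_left_mono)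
      then show ?thesis using z by simp
    qed
    have g0: "g 0 = H x" unfolding g_def by simp
    have Hx: "\<bar>H x\<bar> < T / 2" using d3(2) x H0 unfolding d_def by (simp add: dist_norm)
    have gT: "0 \<le> g T" using mono[of 0 T] T g0 Hx by simp
    have gmT: "g (-T) \<le> 0" using mono[of "-T" 0] T g0 Hx by simp
    have cg: "continuous_on {-T..T} g"
    proof (rule continuous_at_imp_continuous_on, intro ballI)
      fix t assume "t \<in> {-T..T}"
      then have "\<bar>t\<bar> \<le> T" by auto
      then show "isCont g t" by (rule DERIV_isCont[OF gder])
    qed
    obtain t where t: "-T \<le> t" "t \<le> T" "g t = 0" using IVT'[of g "-T" 0 T, OF gmT gT _ cg] T by auto
    have tT: "\<bar>t\<bar> \<le> T" using t by simp
    have bound: "\<bar>t\<bar> \<le> 2 * \<bar>H x\<bar>"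
    proof (cases "t > 0")
      case True then show ?thesis using mono[of 0 t] t g0 T by simp
    next
      case False
      show ?thesis
      proof (cases "t = 0")
        case True then show ?thesis by simp
      next
        case False then have "t < 0" using \<open>\<not> t > 0\<close> by simp
        then show ?thesis using mono[of t 0] t g0 T by simp
      qed
    qed
    show ?thesis
    proof (intro exI conjI impI)
      show "x + t *\<^sub>R v \<in> S" using inS inb tT by blast
      show "H (x + t *\<^sub>R v) = 0" using t unfolding g_def by simp
      show "\<bar>t\<bar> \<le> 2 * \<bar>H x\<bar>" by fact
      assume "H x \<noteq> 0" then show "t \<noteq> 0" using t g0 by auto
    qed
  qed
  have "\<forall>x. \<exists>t. norm (x - x0) < d \<longrightarrow> (x + t *\<^sub>R v \<in> S \<and> H (x + t *\<^sub>R v) = 0 \<and> \<bar>t\<bar> \<le> 2 * \<bar>H x\<bar> \<and> (H x \<noteq> 0 \<longrightarrow> t \<noteq> 0))"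
    using key by blast
  then obtain tf where tf: "\<forall>x. norm (x - x0) < d \<longrightarrow> (x + tf x *\<^sub>R v \<in> S \<and> H (x + tf x *\<^sub>R v) = 0 \<and> \<bar>tf x\<bar> \<le> 2 * \<bar>H x\<bar> \<and> (H x \<noteq> 0 \<longrightarrow> tf x \<noteq> 0))"
    by metis
  have xS: "x \<in> S" if "norm (x - x0) < d" for x
  proof -
    have "norm (x - x0) < r" using that r unfolding d_def by simp
    then show ?thesis using inS by (simp add: dist_norm norm_minus_commute)
  qed
  show ?thesis using tf xS d by blast
qed



lemma chart_D:
  assumes "is_chart (U, \<phi>)"
  shows "open U" "open (\<phi> ` U)" "inj_on \<phi> U" "continuous_on U \<phi>" "continuous_on (\<phi> ` U) (inv_into U \<phi>)"
  using assms unfolding is_chart_def by auto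

lemma chart_open_img:
  assumes c: "is_chart (U, \<phi>)" and W: "open W"
  shows "open (\<phi> ` (U \<inter> W))"
proof -
  note cd = chart_D[OF c]
  have eq: "\<phi> ` (U \<inter> W) = inv_into U \<phi> -` W \<inter> \<phi> ` U"
  proof
    show "\<phi> ` (U \<inter> W) \<subseteq> inv_into U \<phi> -` W \<inter> \<phi> ` U"
    proof
      fix y assume "y \<in> \<phi> ` (U \<inter> W)"
      then obtain m where m: "m \<in> U" "m \<in> W" "y = \<phi> m" by blast
      have "inv_into U \<phi> y = m" using inv_into_f_f[OF cd(3) m(1)] m(3) by simp
      then show "y \<in> inv_into U \<phi> -` W \<inter> \<phi> ` U" using m by simp
    qed
    show "inv_into U \<phi> -` W \<inter> \<phi> ` U \<subseteq> \<phi> ` (U \<inter> W)"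
    proof
      fix y assume y: "y \<in> inv_into U \<phi> -` W \<inter> \<phi> ` U"
      then have "inv_into U \<phi> y \<in> U" "\<phi> (inv_into U \<phi> y) = y" "inv_into U \<phi> y \<in> W"
        by (auto simp: inv_into_into f_inv_into_f)
      then show "y \<in> \<phi> ` (U \<inter> W)" using image_eqI[of y \<phi> "inv_into U \<phi> y" "U \<inter> W"] by simp
    qed
  qed
  show ?thesis unfolding eq using continuous_on_open_vimage[OF cd(2), THEN iffD1, OF cd(5), rule_format, OF W] .
qed

lemma chart_isCont:
  assumes "is_chart (U, \<phi>)" "m \<in> U" shows "isCont \<phi> m"
  using continuous_on_eq_continuous_at[OF chart_D(1)[OF assms(1)], THEN iffD1, OF chart_D(4)[OF assms(1)], rule_format, OF assms(2)] .

lemma chart_inv_isCont: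
  assumes "is_chart (U, \<phi>)" "y \<in> \<phi> ` U" shows "isCont (inv_into U \<phi>) y"
  using continuous_on_eq_continuous_at[OF chart_D(2)[OF assms(1)], THEN iffD1, OF chart_D(5)[OF assms(1)], rule_format, OF assms(2)] .

lemma ev_nhds_within: "eventually P (nhds x) \<Longrightarrow> eventually P (at x within S)"
  unfolding eventually_at_filter by (erule eventually_mono) simp

lemma ev_cont_open:
  assumes "isCont f x" "open V" "f x \<in> V"
  shows "eventually (\<lambda>m. f m \<in> V) (nhds x)"
  using topological_tendstoD[OF assms(1)[unfolded continuous_at tendsto_at_iff_tendsto_nhds] assms(2,3)] .

lemma NT:
  assumes bm: "banach_manifold A" and sh: "smooth_fun A h" and rv: "regular_value0 A h" and h0: "h m0 = 0"
  shows "at m0 within {m. h m \<noteq> 0} \<noteq> bot"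
proof
  assume "at m0 within {m. h m \<noteq> 0} = bot"
  then have "\<not> m0 islimpt {m. h m \<noteq> 0}" using trivial_limit_within[of m0 "{m. h m \<noteq> 0}"] by simp
  then obtain W where W: "open W" "m0 \<in> W" "\<forall>y\<in>W. y \<noteq> m0 \<longrightarrow> h y = 0"
    unfolding islimpt_def by auto
  have Wz: "\<forall>y\<in>W. h y = 0" using W h0 by auto
  obtain c0 where c0: "c0 \<in> A" "m0 \<in> fst c0" using bm unfolding banach_manifold_def by blast
  obtain U \<phi> where c0e: "c0 = (U, \<phi>)" by (cases c0)
  have c: "(U, \<phi>) \<in> A" "m0 \<in> U" using c0 c0e by auto
  have ic: "is_chart (U, \<phi>)" using bm c unfolding banach_manifold_def by blast
  have "smooth_on (\<phi> ` U) (h \<circ> inv_into U \<phi>)" using sh[unfolded smooth_fun_def] c(1) by (simp add: case_prod_beta Ball_def)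
  then obtain H' where C: "C1x (\<phi> ` U) (h \<circ> inv_into U \<phi>) H'" using smooth_on_C1x' by blast
  have d1: "((h \<circ> inv_into U \<phi>) has_derivative H' (\<phi> m0)) (at (\<phi> m0))"
    using C c(2) unfolding C1x_def by blast
  have O: "open (\<phi> ` (U \<inter> W))" by (rule chart_open_img[OF ic W(1)])
  have x0O: "\<phi> m0 \<in> \<phi> ` (U \<inter> W)" using c(2) W(2) by blast
  have z: "\<forall>y\<in>\<phi> ` (U \<inter> W). (h \<circ> inv_into U \<phi>) y = 0"
    using chart_D(3)[OF ic] Wz by (auto simp: inv_into_f_f)
  have d2: "((h \<circ> inv_into U \<phi>) has_derivative (\<lambda>_. 0)) (at (\<phi> m0))"
    by (rule has_derivative_transform_within_open[OF has_derivative_const O x0O]) (use z in auto)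
  have "frechet_derivative (h \<circ> inv_into U \<phi>) (at (\<phi> m0)) = (\<lambda>_. 0)"
    using frechet_derivative_at[OF d2] by simp
  moreover have "frechet_derivative (h \<circ> inv_into U \<phi>) (at (\<phi> m0)) \<noteq> (\<lambda>_. 0)"
    using rv[unfolded regular_value0_def, rule_format, OF h0, OF c(1)] c(2) by simp
  ultimately show False by simp
qed

lemma O_rep_E:
  assumes "O_rep h r (V, \<psi>) f2 f1 m0 \<delta>"
  shows "eventually (\<lambda>m. f1 m \<in> V \<and> f2 m \<in> V \<and> \<psi> (f2 m) - \<psi> (f1 m) = h m ^ r *\<^sub>R \<delta> m) (nhds m0)"
    and "(\<delta> \<longlongrightarrow> \<delta> m0) (at m0)"
  using assms unfolding O_rep_def eventually_nhds continuous_at by auto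

lemma O_rep_ratio:
  assumes "O_rep h r (V, \<psi>) f2 f1 m0 \<delta>"
  shows "((\<lambda>m. (1 / h m ^ r) *\<^sub>R (\<psi> (f2 m) - \<psi> (f1 m))) \<longlongrightarrow> \<delta> m0) (at m0 within {m. h m \<noteq> 0})"
proof -
  have ev: "eventually (\<lambda>m. \<delta> m = (1 / h m ^ r) *\<^sub>R (\<psi> (f2 m) - \<psi> (f1 m))) (at m0 within {m. h m \<noteq> 0})"
    unfolding eventually_at_filter
    by (rule eventually_mono[OF O_rep_E(1)[OF assms]]) auto
  show ?thesis
    by (rule Lim_transform_eventually[OF tendsto_within_subset[OF O_rep_E(2)[OF assms]] ev]) simp
qed

lemma mk_O_rep:
  assumes r: "r \<ge> 1" and h0: "h m0 = 0"
    and ev: "eventually (\<lambda>m. f1 m \<in> V \<and> f2 m \<in> V \<and> (h m = 0 \<longrightarrow> \<psi> (f2 m) = \<psi> (f1 m))) (nhds m0)"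
    and lim: "((\<lambda>m. (1 / h m ^ r) *\<^sub>R (\<psi> (f2 m) - \<psi> (f1 m))) \<longlongrightarrow> v) (at m0 within {m. h m \<noteq> 0})"
  shows "O_rep h r (V, \<psi>) f2 f1 m0 (\<lambda>m. if h m = 0 then v else (1 / h m ^ r) *\<^sub>R (\<psi> (f2 m) - \<psi> (f1 m)))"
proof -
  define \<delta> where "\<delta> = (\<lambda>m. if h m = 0 then v else (1 / h m ^ r) *\<^sub>R (\<psi> (f2 m) - \<psi> (f1 m)))"
  have l1: "(\<delta> \<longlongrightarrow> v) (at m0 within {m. h m \<noteq> 0})"
  proof (rule Lim_transform_eventually[OF lim])
    show "eventually (\<lambda>m. (1 / h m ^ r) *\<^sub>R (\<psi> (f2 m) - \<psi> (f1 m)) = \<delta> m) (at m0 within {m. h m \<noteq> 0})"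
      unfolding eventually_at_filter \<delta>_def by simp
  qed
  have l2: "(\<delta> \<longlongrightarrow> v) (at m0 within {m. h m = 0})"
  proof (rule Lim_transform_eventually[OF tendsto_const])
    show "eventually (\<lambda>m. v = \<delta> m) (at m0 within {m. h m = 0})"
      unfolding eventually_at_filter \<delta>_def by simp
  qed
  have U: "{m. h m \<noteq> 0} \<union> {m. h m = 0} = UNIV" by auto
  have "(\<delta> \<longlongrightarrow> v) (at m0)" using Lim_within_Un[of \<delta> v m0 "{m. h m \<noteq> 0}" "{m. h m = 0}"] l1 l2 U by simp
  then have c: "continuous (at m0) \<delta>" unfolding continuous_at \<delta>_def using h0 by simp
  obtain W where W: "open W" "m0 \<in> W" "\<forall>m\<in>W. f1 m \<in> V \<and> f2 m \<in> V \<and> (h m = 0 \<longrightarrow> \<psi> (f2 m) = \<psi> (f1 m))"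
    using ev unfolding eventually_nhds by blast
  have eq: "\<psi> (f2 m) - \<psi> (f1 m) = h m ^ r *\<^sub>R \<delta> m" if "m \<in> W" for m
  proof (cases "h m = 0")
    case True then show ?thesis using W that r unfolding \<delta>_def by (simp add: power_0_left)
  next
    case False then show ?thesis unfolding \<delta>_def by simp
  qed
  show ?thesis unfolding O_rep_def \<delta>_def[symmetric] using c W eq by auto
qed

lemma res_rep_eq:
  assumes nt: "at m0 within {m. h m \<noteq> 0} \<noteq> bot" and O: "O_rep h r (V, \<psi>) f2 f1 m0 \<delta>"
  shows "res_rep h r (V, \<psi>) f2 f1 m0 = \<delta> m0"
  unfolding res_rep_def
proof (rule the_equality)
  show "\<exists>\<delta>'. O_rep h r (V, \<psi>) f2 f1 m0 \<delta>' \<and> \<delta>' m0 = \<delta> m0" using O by blast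
next
  fix w assume "\<exists>\<delta>'. O_rep h r (V, \<psi>) f2 f1 m0 \<delta>' \<and> \<delta>' m0 = w"
  then obtain \<delta>' where O': "O_rep h r (V, \<psi>) f2 f1 m0 \<delta>'" "\<delta>' m0 = w" by blast
  show "w = \<delta> m0" using tendsto_unique[OF nt O_rep_ratio[OF O'(1)] O_rep_ratio[OF O]] O'(2) by simp
qed

lemma CC:
  fixes \<mu> \<mu>' :: "'n::t2_space \<Rightarrow> 'f::banach"
  assumes r: "r \<ge> 1" and h0: "h m0 = 0" and ch: "is_chart (V, \<mu>)" and ch': "is_chart (V', \<mu>')"
    and O: "O_rep h r (V, \<mu>) f2 f1 m0 \<delta>" and inV': "f1 m0 \<in> V'"
    and c1: "isCont f1 m0" and c2: "isCont f2 m0"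
    and sm: "smooth_on (\<mu> ` (V \<inter> V')) (\<mu>' \<circ> inv_into V \<mu>)"
  shows "\<exists>\<delta>'. O_rep h r (V', \<mu>') f2 f1 m0 \<delta>'"
proof -
  note ev = O_rep_E(1)[OF O]
  have at0: "f1 m0 \<in> V \<and> f2 m0 \<in> V \<and> \<mu> (f2 m0) - \<mu> (f1 m0) = h m0 ^ r *\<^sub>R \<delta> m0"
    using eventually_nhds_x_imp_x[OF ev] .
  have inj: "inj_on \<mu> V" using chart_D[OF ch] by simp
  have eq0: "f2 m0 = f1 m0"
  proof -
    have "\<mu> (f2 m0) = \<mu> (f1 m0)" using at0 h0 r by (simp add: power_0_left)
    then show ?thesis using at0 inj by (meson inj_on_eq_iff)
  qed
  have f2V: "f2 m0 \<in> V" using at0 by blast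
  obtain \<tau>' where C: "C1x (\<mu> ` (V \<inter> V')) (\<mu>' \<circ> inv_into V \<mu>) \<tau>'" using smooth_on_C1x'[OF sm] by blast
  define F where "F = at m0 within {m. h m \<noteq> 0}"
  have y0: "\<mu> (f1 m0) \<in> \<mu> ` (V \<inter> V')" using at0 inV' by blast
  have ta: "((\<lambda>m. \<mu> (f1 m)) \<longlongrightarrow> \<mu> (f1 m0)) F" unfolding F_def
    by (rule tendsto_within_subset[OF isCont_o2[OF c1 chart_isCont[OF ch conjunct1[OF at0]], unfolded isCont_def]]) simp
  have tb: "((\<lambda>m. \<mu> (f2 m)) \<longlongrightarrow> \<mu> (f1 m0)) F" unfolding F_def
    using tendsto_within_subset[OF isCont_o2[OF c2 chart_isCont[OF ch f2V], unfolded isCont_def]] eq0 at0 by simp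
  have lim: "((\<lambda>m. (1 / h m ^ r) *\<^sub>R ((\<mu>' \<circ> inv_into V \<mu>) (\<mu> (f2 m)) - (\<mu>' \<circ> inv_into V \<mu>) (\<mu> (f1 m)))) \<longlongrightarrow> \<tau>' (\<mu> (f1 m0)) (\<delta> m0)) F"
    by (rule RL[OF C y0 ta tb]) (use O_rep_ratio[OF O] in \<open>simp add: F_def\<close>)
  have evF: "eventually (\<lambda>m. (1 / h m ^ r) *\<^sub>R ((\<mu>' \<circ> inv_into V \<mu>) (\<mu> (f2 m)) - (\<mu>' \<circ> inv_into V \<mu>) (\<mu> (f1 m)))
       = (1 / h m ^ r) *\<^sub>R (\<mu>' (f2 m) - \<mu>' (f1 m))) F"
    unfolding F_def by (rule ev_nhds_within, rule eventually_mono[OF ev]) (simp add: inv_into_f_f[OF inj])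
  have lim2: "((\<lambda>m. (1 / h m ^ r) *\<^sub>R (\<mu>' (f2 m) - \<mu>' (f1 m))) \<longlongrightarrow> \<tau>' (\<mu> (f1 m0)) (\<delta> m0)) (at m0 within {m. h m \<noteq> 0})"
    using Lim_transform_eventually[OF lim evF] unfolding F_def .
  have e1: "eventually (\<lambda>m. f1 m \<in> V') (nhds m0)" using ev_cont_open[OF c1 chart_D(1)[OF ch'] inV'] .
  have e2: "eventually (\<lambda>m. f2 m \<in> V') (nhds m0)" using ev_cont_open[OF c2 chart_D(1)[OF ch']] inV' eq0 by simp
  have e3: "eventually (\<lambda>m. h m = 0 \<longrightarrow> \<mu>' (f2 m) = \<mu>' (f1 m)) (nhds m0)"
  proof (rule eventually_mono[OF ev], intro impI)
    fix m assume a: "f1 m \<in> V \<and> f2 m \<in> V \<and> \<mu> (f2 m) - \<mu> (f1 m) = h m ^ r *\<^sub>R \<delta> m" and "h m = 0"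
    then have "\<mu> (f2 m) = \<mu> (f1 m)" using r by (simp add: power_0_left)
    then have "f2 m = f1 m" using a inj unfolding inj_on_def by blast
    then show "\<mu>' (f2 m) = \<mu>' (f1 m)" by simp
  qed
  have "eventually (\<lambda>m. f1 m \<in> V' \<and> f2 m \<in> V' \<and> (h m = 0 \<longrightarrow> \<mu>' (f2 m) = \<mu>' (f1 m))) (nhds m0)"
    using eventually_conj[OF e1 eventually_conj[OF e2 e3]] .
  from mk_O_rep[OF r h0 this lim2] show ?thesis by blast
qed



lemma C1x_subset: "C1x S G G' \<Longrightarrow> open T \<Longrightarrow> T \<subseteq> S \<Longrightarrow> C1x T G G'"
  unfolding C1x_def by (meson subsetD)

lemma C1x_der: "C1x S G G' \<Longrightarrow> x \<in> S \<Longrightarrow> (G has_derivative G' x) (at x)"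
  unfolding C1x_def by blast

lemma C1x_isCont: "C1x S G G' \<Longrightarrow> x \<in> S \<Longrightarrow> isCont G x"
  using C1x_der has_derivative_continuous by blast

lemma C1_map_D:
  assumes "C1_map A B f" "(U, \<phi>) \<in> A" "(V, \<psi>) \<in> B"
  shows "C1_on (\<phi> ` (U \<inter> f -` V)) (\<psi> \<circ> f \<circ> inv_into U \<phi>)"
  using assms(1)[unfolded C1_map_def, THEN conjunct2, rule_format, OF assms(2)] assms(3) by fastforce

lemma C1_map_cont: "C1_map A B f \<Longrightarrow> isCont f x"
  unfolding C1_map_def using continuous_on_eq_continuous_at[OF open_UNIV] by blast

lemma C1_map_open_vimage: "C1_map A B f \<Longrightarrow> open V \<Longrightarrow> open (f -` V)"
  unfolding C1_map_def using continuous_on_open_vimage[OF open_UNIV] by auto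

lemma smooth_fun_D: "smooth_fun A h \<Longrightarrow> (U, \<phi>) \<in> A \<Longrightarrow> smooth_on (\<phi> ` U) (h \<circ> inv_into U \<phi>)"
  unfolding smooth_fun_def by fastforce

lemma bm_chart:
  assumes "banach_manifold A" obtains U \<phi> where "(U, \<phi>) \<in> A" "x \<in> U"
proof -
  obtain c where c: "c \<in> A" "x \<in> fst c" using assms unfolding banach_manifold_def by blast
  obtain U \<phi> where "c = (U, \<phi>)" by (cases c)
  then show ?thesis using that c by auto
qed

lemma bm_is_chart: "banach_manifold A \<Longrightarrow> c \<in> A \<Longrightarrow> is_chart c"
  unfolding banach_manifold_def by blast

lemma bm_compat: "banach_manifold A \<Longrightarrow> c \<in> A \<Longrightarrow> d \<in> A \<Longrightarrow> smooth_compat c d"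
  unfolding banach_manifold_def by blast

lemma chart_of_is_chart: "chart_of A c \<Longrightarrow> is_chart c"
  unfolding chart_of_def by blast

lemma chart_of_compat: "chart_of A c \<Longrightarrow> d \<in> A \<Longrightarrow> smooth_compat c d"
  unfolding chart_of_def by blast

lemma ev_cont_comp:
  assumes "isCont f x" "eventually P (nhds (f x))"
  shows "eventually (\<lambda>m. P (f m)) (nhds x)"
  using assms(1)[unfolded continuous_at tendsto_at_iff_tendsto_nhds] assms(2) unfolding filterlim_iff by blast



lemma FDOT_lim:
  fixes AM :: "('m::t2_space set \<times> ('m \<Rightarrow> 'e::banach)) set"
    and AN :: "('n::t2_space set \<times> ('n \<Rightarrow> 'f::banach)) set"
    and hM :: "'m \<Rightarrow> real" and hN :: "'n \<Rightarrow> real" and f :: "'m \<Rightarrow> 'n"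
  assumes bmM: "banach_manifold AM" and bmN: "banach_manifold AN"
    and shM: "smooth_fun AM hM" and rvM: "regular_value0 AM hM" and shN: "smooth_fun AN hN"
    and C1f: "C1_map AM AN f" and z: "\<And>m. hM m = 0 \<Longrightarrow> hN (f m) = 0" and h0: "hM m0 = 0"
  shows "\<exists>a. ((\<lambda>m. hN (f m) / hM m) \<longlongrightarrow> a) (at m0 within {m. hM m \<noteq> 0})"
proof -
  obtain U \<phi> where cU: "(U, \<phi>) \<in> AM" "m0 \<in> U" using bm_chart[OF bmM] by blast
  obtain Vn \<nu> where cV: "(Vn, \<nu>) \<in> AN" "f m0 \<in> Vn" using bm_chart[OF bmN] by blast
  have icU: "is_chart (U, \<phi>)" using bm_is_chart[OF bmM cU(1)] .
  have icV: "is_chart (Vn, \<nu>)" using bm_is_chart[OF bmN cV(1)] .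
  have injU: "inj_on \<phi> U" using chart_D[OF icU] by simp
  have injV: "inj_on \<nu> Vn" using chart_D[OF icV] by simp
  define HH where "HH = hM \<circ> inv_into U \<phi>"
  define Phi where "Phi = hN \<circ> inv_into Vn \<nu>"
  define Fm where "Fm = \<nu> \<circ> f \<circ> inv_into U \<phi>"
  define S where "S = \<phi> ` (U \<inter> f -` Vn)"
  obtain H' where CH0: "C1x (\<phi> ` U) HH H'" using smooth_on_C1x'[OF smooth_fun_D[OF shM cU(1)]] unfolding HH_def by blast
  obtain Phi' where CP: "C1x (\<nu> ` Vn) Phi Phi'" using smooth_on_C1x'[OF smooth_fun_D[OF shN cV(1)]] unfolding Phi_def by blast
  obtain Fm' where CF: "C1x S Fm Fm'" using C1_on_C1x[OF C1_map_D[OF C1f cU(1) cV(1)]] unfolding Fm_def S_def by blast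
  have oS: "open S" unfolding S_def by (rule chart_open_img[OF icU C1_map_open_vimage[OF C1f chart_D(1)[OF icV]]])
  define x0 where "x0 = \<phi> m0"
  have x0S: "x0 \<in> S" unfolding S_def x0_def using cU cV by blast
  have CH: "C1x S HH H'" by (rule C1x_subset[OF CH0 oS]) (auto simp: S_def)
  have HHphi: "HH (\<phi> m) = hM m" if "m \<in> U" for m unfolding HH_def using inv_into_f_f[OF injU that] by simp
  have HH0: "HH x0 = 0" using HHphi[OF cU(2)] h0 unfolding x0_def by simp
  have fd: "frechet_derivative HH (at x0) = H' x0"
    using frechet_derivative_at[OF C1x_der[OF CH0]] cU(2) unfolding x0_def by auto
  have "frechet_derivative HH (at x0) \<noteq> (\<lambda>_. 0)"
    using rvM[unfolded regular_value0_def, rule_format, OF h0, OF cU(1)] cU(2) unfolding HH_def x0_def by simp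
  then obtain w where w: "H' x0 w \<noteq> 0" using fd by auto
  have blH: "bounded_linear (H' x0)" using C1x_der[OF CH x0S] has_derivative_bounded_linear by blast
  define v where "v = (1 / H' x0 w) *\<^sub>R w"
  have v: "H' x0 v = 1" unfolding v_def using w by (simp add: linear_scale[OF bounded_linear.linear[OF blH]])
  obtain d t where dt: "d > 0" "\<forall>x. norm (x - x0) < d \<longrightarrow> x \<in> S \<and> x + t x *\<^sub>R v \<in> S \<and>
            HH (x + t x *\<^sub>R v) = 0 \<and> \<bar>t x\<bar> \<le> 2 * \<bar>HH x\<bar> \<and> (HH x \<noteq> 0 \<longrightarrow> t x \<noteq> 0)"
    using LINE[OF CH x0S HH0 v] by blast
  define F where "F = at m0 within {m. hM m \<noteq> 0}"
  have e1: "eventually (\<lambda>m. m \<in> U) (nhds m0)" using eventually_nhds_in_open[OF chart_D(1)[OF icU] cU(2)] .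
  have e2: "eventually (\<lambda>m. f m \<in> Vn) (nhds m0)" using ev_cont_open[OF C1_map_cont[OF C1f] chart_D(1)[OF icV] cV(2)] .
  have e3: "eventually (\<lambda>m. \<phi> m \<in> ball x0 d) (nhds m0)"
    using ev_cont_open[OF chart_isCont[OF icU cU(2)] open_ball] dt(1) unfolding x0_def by simp
  have evF: "eventually (\<lambda>m. m \<in> U \<and> f m \<in> Vn \<and> norm (\<phi> m - x0) < d \<and> hM m \<noteq> 0) F"
  proof -
    have "eventually (\<lambda>m. m \<in> U \<and> f m \<in> Vn \<and> \<phi> m \<in> ball x0 d) (nhds m0)"
      using eventually_conj[OF e1 eventually_conj[OF e2 e3]] .
    then show ?thesis unfolding F_def eventually_at_filter
      by (rule eventually_mono) (auto simp: dist_norm norm_minus_commute)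
  qed
  define b where "b m = \<phi> m" for m
  define s where "s m = t (\<phi> m)" for m
  define a where "a m = \<phi> m + s m *\<^sub>R v" for m
  have pt: "b m \<in> S \<and> a m \<in> S \<and> s m \<noteq> 0 \<and> HH (b m) = hM m \<and> HH (a m) = 0 \<and>
       (1 / s m) *\<^sub>R (b m - a m) = - v \<and> Phi (Fm (b m)) = hN (f m) \<and> Phi (Fm (a m)) = 0 \<and>
       \<bar>s m\<bar> \<le> 2 * \<bar>HH (\<phi> m)\<bar>"
    if m: "m \<in> U" "f m \<in> Vn" "norm (\<phi> m - x0) < d" "hM m \<noteq> 0" for m
  proof -
    note dm = dt(2)[rule_format, OF m(3)]
    have hb: "HH (b m) = hM m" unfolding b_def using HHphi[OF m(1)] .
    have sn: "s m \<noteq> 0" using dm hb m(4) unfolding s_def b_def by simp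
    have aS: "a m \<in> S" using dm unfolding a_def s_def by simp
    then obtain m' where m': "m' \<in> U" "f m' \<in> Vn" "a m = \<phi> m'" unfolding S_def by blast
    have "hM m' = 0" using dm HHphi[OF m'(1)] m'(3) unfolding a_def s_def by simp
    then have z': "hN (f m') = 0" by (rule z)
    have pa: "Phi (Fm (a m)) = 0" unfolding Phi_def Fm_def using m'
      by (simp add: inv_into_f_f[OF injU] inv_into_f_f[OF injV] z')
    have pb: "Phi (Fm (b m)) = hN (f m)" unfolding Phi_def Fm_def b_def using m
      by (simp add: inv_into_f_f[OF injU] inv_into_f_f[OF injV])
    have rv: "(1 / s m) *\<^sub>R (b m - a m) = - v" unfolding a_def b_def using sn by simp
    show ?thesis using dm hb sn aS pa pb rv unfolding a_def b_def s_def by simp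
  qed
  have ev: "eventually (\<lambda>m. b m \<in> S \<and> a m \<in> S \<and> s m \<noteq> 0 \<and> HH (b m) = hM m \<and> HH (a m) = 0 \<and>
       (1 / s m) *\<^sub>R (b m - a m) = - v \<and> Phi (Fm (b m)) = hN (f m) \<and> Phi (Fm (a m)) = 0 \<and>
       \<bar>s m\<bar> \<le> 2 * \<bar>HH (\<phi> m)\<bar>) F"
    using evF by (rule eventually_mono) (use pt in blast)
  have tb: "(b \<longlongrightarrow> x0) F" unfolding b_def F_def x0_def
    by (rule tendsto_within_subset[OF chart_isCont[OF icU cU(2), unfolded continuous_at]]) simp
  have tH: "((\<lambda>m. HH (\<phi> m)) \<longlongrightarrow> 0) F"
    using isCont_tendsto_compose[OF C1x_isCont[OF CH x0S] tb[unfolded b_def]] HH0 by simp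
  have ts: "(s \<longlongrightarrow> 0) F"
    by (rule tendsto_0_le[OF tH, of _ 2]) (rule eventually_mono[OF ev], simp add: mult.commute)
  have ta: "(a \<longlongrightarrow> x0) F"
    using tendsto_add[OF tb tendsto_scaleR[OF ts tendsto_const[of v]]] unfolding a_def b_def by simp
  have tv: "((\<lambda>m. (1 / s m) *\<^sub>R (b m - a m)) \<longlongrightarrow> - v) F"
    by (rule Lim_transform_eventually[OF tendsto_const]) (rule eventually_mono[OF ev], simp)
  have r1: "((\<lambda>m. (1 / s m) *\<^sub>R (Fm (b m) - Fm (a m))) \<longlongrightarrow> Fm' x0 (- v)) F"
    by (rule RL[OF CF x0S ta tb tv])
  have Fx0: "Fm x0 \<in> \<nu> ` Vn" unfolding Fm_def x0_def using cV(2) inv_into_f_f[OF injU cU(2)] by simp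
  have tFa: "((\<lambda>m. Fm (a m)) \<longlongrightarrow> Fm x0) F" by (rule isCont_tendsto_compose[OF C1x_isCont[OF CF x0S] ta])
  have tFb: "((\<lambda>m. Fm (b m)) \<longlongrightarrow> Fm x0) F" by (rule isCont_tendsto_compose[OF C1x_isCont[OF CF x0S] tb])
  have r2: "((\<lambda>m. (1 / s m) *\<^sub>R (Phi (Fm (b m)) - Phi (Fm (a m)))) \<longlongrightarrow> Phi' (Fm x0) (Fm' x0 (- v))) F"
    by (rule RL[OF CP Fx0 tFa tFb r1])
  have r3: "((\<lambda>m. (1 / s m) *\<^sub>R (HH (b m) - HH (a m))) \<longlongrightarrow> H' x0 (- v)) F"
    by (rule RL[OF CH x0S ta tb tv])
  have m1: "H' x0 (- v) = -1" using v linear_neg[OF bounded_linear.linear[OF blH]] by simp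
  have q: "((\<lambda>m. ((1 / s m) *\<^sub>R (Phi (Fm (b m)) - Phi (Fm (a m)))) / ((1 / s m) *\<^sub>R (HH (b m) - HH (a m))))
      \<longlongrightarrow> Phi' (Fm x0) (Fm' x0 (- v)) / H' x0 (- v)) F"
    by (rule tendsto_divide[OF r2 r3]) (simp add: m1)
  have "((\<lambda>m. hN (f m) / hM m) \<longlongrightarrow> Phi' (Fm x0) (Fm' x0 (- v)) / H' x0 (- v)) F"
    by (rule Lim_transform_eventually[OF q]) (rule eventually_mono[OF ev], simp)
  then show ?thesis unfolding F_def by blast
qed



lemma FDOT_char:
  fixes AM :: "('m::t2_space set \<times> ('m \<Rightarrow> 'e::banach)) set"
    and hM :: "'m \<Rightarrow> real" and hN :: "'n::t2_space \<Rightarrow> real" and f :: "'m \<Rightarrow> 'n"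
  assumes bmM: "banach_manifold AM" and shM: "smooth_fun AM hM"
    and z: "\<And>m. hM m = 0 \<Longrightarrow> hN (f m) = 0" and h0: "hM m0 = 0"
    and lim: "((\<lambda>m. hN (f m) / hM m) \<longlongrightarrow> a) (at m0 within {m. hM m \<noteq> 0})"
    and cU: "(U, \<phi>) \<in> AM" "m0 \<in> U"
  shows "frechet_derivative (hN \<circ> f \<circ> inv_into U \<phi>) (at (\<phi> m0)) =
      (\<lambda>v. a * frechet_derivative (hM \<circ> inv_into U \<phi>) (at (\<phi> m0)) v)"
proof -
  have icU: "is_chart (U, \<phi>)" using bm_is_chart[OF bmM cU(1)] .
  have injU: "inj_on \<phi> U" using chart_D[OF icU] by simp
  define H2 where "H2 = hM \<circ> inv_into U \<phi>"
  define Q where "Q = hN \<circ> f \<circ> inv_into U \<phi>"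
  define y0 where "y0 = \<phi> m0"
  have y0U: "y0 \<in> \<phi> ` U" using cU unfolding y0_def by blast
  obtain H2' where CH: "C1x (\<phi> ` U) H2 H2'" using smooth_on_C1x'[OF smooth_fun_D[OF shM cU(1)]] unfolding H2_def by blast
  have dH: "(H2 has_derivative H2' y0) (at y0)" using C1x_der[OF CH y0U] .
  have bl: "bounded_linear (H2' y0)" using dH has_derivative_bounded_linear by blast
  obtain K where K: "K > 0" "\<forall>x. norm (H2' y0 x) \<le> norm x * K" using bounded_linear.pos_bounded[OF bl] by blast
  have inv0: "inv_into U \<phi> y0 = m0" unfolding y0_def using inv_into_f_f[OF injU cU(2)] .
  have H20: "H2 y0 = 0" unfolding H2_def using inv0 h0 by simp
  have Q0: "Q y0 = 0" unfolding Q_def using inv0 z[OF h0] by simp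
  obtain d1 where d1: "d1 > 0" "\<forall>y. norm (y - y0) < d1 \<longrightarrow> norm (H2 y - H2 y0 - H2' y0 (y - y0)) \<le> 1 * norm (y - y0)"
    using dH[unfolded has_derivative_at_alt] by (meson zero_less_one)
  have lip: "\<bar>H2 y\<bar> \<le> (K + 1) * norm (y - y0)" if "norm (y - y0) < d1" for y
  proof -
    have 1: "norm (H2 y - H2' y0 (y - y0)) \<le> norm (y - y0)" using d1(2) that H20 by simp
    have 2: "norm (H2' y0 (y - y0)) \<le> norm (y - y0) * K" using K(2) by blast
    have "norm (H2 y) \<le> norm (H2 y - H2' y0 (y - y0)) + norm (H2' y0 (y - y0))"
      using norm_triangle_ineq[of "H2 y - H2' y0 (y - y0)" "H2' y0 (y - y0)"] by simp
    then show ?thesis using 1 2 by (simp add: algebra_simps)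
  qed
  define G where "G = at y0 within {y. y \<in> \<phi> ` U \<and> H2 y \<noteq> 0}"
  have fl: "filterlim (inv_into U \<phi>) (at m0 within {m. hM m \<noteq> 0}) G"
    unfolding filterlim_at
  proof
    show "eventually (\<lambda>y. inv_into U \<phi> y \<in> {m. hM m \<noteq> 0} \<and> inv_into U \<phi> y \<noteq> m0) G"
      unfolding G_def eventually_at_filter
    proof (rule always_eventually, intro allI impI)
      fix y assume y: "y \<noteq> y0" "y \<in> {y. y \<in> \<phi> ` U \<and> H2 y \<noteq> 0}"
      have "\<phi> (inv_into U \<phi> y) = y" using y(2) by (simp add: f_inv_into_f)
      then have "inv_into U \<phi> y \<noteq> m0" using y(1) unfolding y0_def by auto
      moreover have "hM (inv_into U \<phi> y) \<noteq> 0" using y(2) unfolding H2_def by simp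
      ultimately show "inv_into U \<phi> y \<in> {m. hM m \<noteq> 0} \<and> inv_into U \<phi> y \<noteq> m0" by simp
    qed
    show "(inv_into U \<phi> \<longlongrightarrow> m0) G" unfolding G_def
      using tendsto_within_subset[OF chart_inv_isCont[OF icU y0U, unfolded continuous_at]] inv0 by simp
  qed
  have limG: "((\<lambda>y. hN (f (inv_into U \<phi> y)) / hM (inv_into U \<phi> y)) \<longlongrightarrow> a) G"
    using filterlim_compose[OF lim fl] .
  have dR: "((\<lambda>y. Q y - a * H2 y) has_derivative (\<lambda>_. 0)) (at y0)"
    unfolding has_derivative_at_alt
  proof (intro conjI allI impI bounded_linear_zero)
    fix e :: real assume e: "e > 0"
    define e' where "e' = e / (K + 1)"
    have e': "e' > 0" using e K unfolding e'_def by simp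
    obtain d2 where d2: "d2 > 0" "\<forall>y\<in>{y. y \<in> \<phi> ` U \<and> H2 y \<noteq> 0}. y \<noteq> y0 \<and> dist y y0 < d2 \<longrightarrow>
        dist (hN (f (inv_into U \<phi> y)) / hM (inv_into U \<phi> y)) a < e'"
      using tendstoD[OF limG e'] unfolding G_def eventually_at by blast
    obtain d3 where d3: "d3 > 0" "ball y0 d3 \<subseteq> \<phi> ` U" using chart_D(2)[OF icU] y0U open_contains_ball by blast
    show "\<exists>d>0. \<forall>y. norm (y - y0) < d \<longrightarrow> norm (Q y - a * H2 y - (Q y0 - a * H2 y0) - 0) \<le> e * norm (y - y0)"
    proof (intro exI[of _ "min d1 (min d2 d3)"] conjI allI impI)
      show "min d1 (min d2 d3) > 0" using d1 d2 d3 by simp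
      fix y assume y: "norm (y - y0) < min d1 (min d2 d3)"
      have "dist y0 y < d3" using y by (simp add: dist_norm norm_minus_commute)
      then have yU: "y \<in> \<phi> ` U" using d3(2) by auto
      define m' where "m' = inv_into U \<phi> y"
      have H2y: "H2 y = hM m'" unfolding H2_def m'_def by simp
      have Qy: "Q y = hN (f m')" unfolding Q_def m'_def by simp
      show "norm (Q y - a * H2 y - (Q y0 - a * H2 y0) - 0) \<le> e * norm (y - y0)"
      proof (cases "H2 y = 0")
        case True
        then have "Q y = 0" using Qy H2y z by simp
        then show ?thesis using True Q0 H20 e by simp
      next
        case False
        then have yne: "y \<noteq> y0" using H20 by auto
        have yd2: "dist y y0 < d2" using y by (simp add: dist_norm)
        have "dist (hN (f (inv_into U \<phi> y)) / hM (inv_into U \<phi> y)) a < e'"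
          using d2(2) yU False yne yd2 by blast
        then have dk: "\<bar>hN (f m') / hM m' - a\<bar> < e'" unfolding m'_def by (simp add: dist_real_def)
        have eq: "Q y - a * H2 y = (hN (f m') / hM m' - a) * H2 y" using False H2y Qy by (simp add: field_simps)
        have "\<bar>(hN (f m') / hM m' - a) * H2 y\<bar> \<le> e' * ((K + 1) * norm (y - y0))"
        proof -
          have l: "\<bar>H2 y\<bar> \<le> (K + 1) * norm (y - y0)" using lip y by simp
          show ?thesis unfolding abs_mult
            by (rule mult_mono[OF less_imp_le[OF dk] l]) (use e' in simp_all)
        qed
        also have "\<dots> = e * norm (y - y0)" unfolding e'_def using K by simp
        finally show ?thesis using eq Q0 H20 by simp
      qed
    qed
  qed
  have dQ: "(Q has_derivative (\<lambda>v. a * H2' y0 v)) (at y0)"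
  proof -
    have "((\<lambda>y. (Q y - a * H2 y) + a * H2 y) has_derivative (\<lambda>v. 0 + a * H2' y0 v)) (at y0)"
      by (rule has_derivative_add[OF dR has_derivative_mult_right[OF dH]])
    then show ?thesis by simp
  qed
  show ?thesis
    using frechet_derivative_at[OF dQ] frechet_derivative_at[OF dH] unfolding Q_def H2_def y0_def by simp
qed



lemma FDOT:
  fixes AM :: "('m::t2_space set \<times> ('m \<Rightarrow> 'e::banach)) set"
    and AN :: "('n::t2_space set \<times> ('n \<Rightarrow> 'f::banach)) set"
    and hM :: "'m \<Rightarrow> real" and hN :: "'n \<Rightarrow> real" and f :: "'m \<Rightarrow> 'n"
  assumes bmM: "banach_manifold AM" and bmN: "banach_manifold AN"
    and shM: "smooth_fun AM hM" and rvM: "regular_value0 AM hM" and shN: "smooth_fun AN hN"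
    and C1f: "C1_map AM AN f" and z: "\<And>m. hM m = 0 \<Longrightarrow> hN (f m) = 0" and h0: "hM m0 = 0"
  shows "((\<lambda>m. hN (f m) / hM m) \<longlongrightarrow> fdot AM hM hN f m0) (at m0 within {m. hM m \<noteq> 0})"
proof -
  obtain a where lim: "((\<lambda>m. hN (f m) / hM m) \<longlongrightarrow> a) (at m0 within {m. hM m \<noteq> 0})"
    using FDOT_lim[OF bmM bmN shM rvM shN C1f z h0] by blast
  have Pa: "\<forall>(U, \<phi>)\<in>AM. m0 \<in> U \<longrightarrow> frechet_derivative (hN \<circ> f \<circ> inv_into U \<phi>) (at (\<phi> m0)) =
      (\<lambda>v. a * frechet_derivative (hM \<circ> inv_into U \<phi>) (at (\<phi> m0)) v)"
  proof (intro ballI)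
    fix c assume c: "c \<in> AM"
    obtain U \<phi> where ce: "c = (U, \<phi>)" by (cases c)
    show "case c of (U, \<phi>) \<Rightarrow> m0 \<in> U \<longrightarrow> frechet_derivative (hN \<circ> f \<circ> inv_into U \<phi>) (at (\<phi> m0)) =
      (\<lambda>v. a * frechet_derivative (hM \<circ> inv_into U \<phi>) (at (\<phi> m0)) v)"
      unfolding ce using FDOT_char[where AM=AM and hM=hM and hN=hN and f=f and a=a and U=U and \<phi>=\<phi>, OF bmM shM z h0 lim] c ce by simp
  qed
  have "fdot AM hM hN f m0 = a" unfolding fdot_def
  proof (rule the_equality)
    show "\<forall>(U, \<phi>)\<in>AM. m0 \<in> U \<longrightarrow> frechet_derivative (hN \<circ> f \<circ> inv_into U \<phi>) (at (\<phi> m0)) =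
      (\<lambda>v. a * frechet_derivative (hM \<circ> inv_into U \<phi>) (at (\<phi> m0)) v)" by (rule Pa)
  next
    fix a' assume Pa': "\<forall>(U, \<phi>)\<in>AM. m0 \<in> U \<longrightarrow> frechet_derivative (hN \<circ> f \<circ> inv_into U \<phi>) (at (\<phi> m0)) =
      (\<lambda>v. a' * frechet_derivative (hM \<circ> inv_into U \<phi>) (at (\<phi> m0)) v)"
    obtain U \<phi> where cU: "(U, \<phi>) \<in> AM" "m0 \<in> U" using bm_chart[OF bmM] by blast
    define D where "D = frechet_derivative (hM \<circ> inv_into U \<phi>) (at (\<phi> m0))"
    have e1: "frechet_derivative (hN \<circ> f \<circ> inv_into U \<phi>) (at (\<phi> m0)) = (\<lambda>v. a * D v)"
      using Pa[rule_format, OF cU(1)] cU(2) unfolding D_def by simp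
    have e2: "frechet_derivative (hN \<circ> f \<circ> inv_into U \<phi>) (at (\<phi> m0)) = (\<lambda>v. a' * D v)"
      using Pa'[rule_format, OF cU(1)] cU(2) unfolding D_def by simp
    have "D \<noteq> (\<lambda>_. 0)"
      using rvM[unfolded regular_value0_def, rule_format, OF h0, OF cU(1)] cU(2) unfolding D_def by simp
    then obtain w where w: "D w \<noteq> 0" by auto
    have "a * D w = a' * D w" using e1 e2 by metis
    then show "a' = a" using w by simp
  qed
  then show ?thesis using lim by simp
qed

lemma CC2:
  fixes \<mu>0 \<mu> :: "'n::t2_space \<Rightarrow> 'f::banach"
  assumes bm: "banach_manifold B" and c0: "chart_of B (V0, \<mu>0)" and c: "chart_of B (V, \<mu>)"
    and r: "r \<ge> 1" and h0: "h m0 = 0" and O: "O_rep h r (V0, \<mu>0) f2 f1 m0 \<delta>"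
    and inV: "f1 m0 \<in> V" and c1: "isCont f1 m0" and c2: "isCont f2 m0"
  shows "\<exists>\<delta>'. O_rep h r (V, \<mu>) f2 f1 m0 \<delta>'"
proof -
  obtain Vb \<nu> where cb: "(Vb, \<nu>) \<in> B" "f1 m0 \<in> Vb" using bm_chart[OF bm] by blast
  have sc0: "smooth_compat (V0, \<mu>0) (Vb, \<nu>)" by (rule chart_of_compat[OF c0 cb(1)])
  have sc: "smooth_compat (V, \<mu>) (Vb, \<nu>)" by (rule chart_of_compat[OF c cb(1)])
  have s1: "smooth_on (\<mu>0 ` (V0 \<inter> Vb)) (\<nu> \<circ> inv_into V0 \<mu>0)" using sc0 unfolding smooth_compat_def by simp
  have s2: "smooth_on (\<nu> ` (Vb \<inter> V)) (\<mu> \<circ> inv_into Vb \<nu>)" using sc unfolding smooth_compat_def by (simp add: Int_commute)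
  obtain \<delta>1 where O1: "O_rep h r (Vb, \<nu>) f2 f1 m0 \<delta>1"
    using CC[OF r h0 chart_of_is_chart[OF c0] bm_is_chart[OF bm cb(1)] O cb(2) c1 c2 s1] by blast
  show ?thesis
    using CC[OF r h0 bm_is_chart[OF bm cb(1)] chart_of_is_chart[OF c] O1 inV c1 c2 s2] .
qed



lemma MAIN:
  fixes AM :: "('m::t2_space set \<times> ('m \<Rightarrow> 'e::banach)) set"
    and AN :: "('n::t2_space set \<times> ('n \<Rightarrow> 'f::banach)) set"
    and AP :: "('p::t2_space set \<times> ('p \<Rightarrow> 'g::banach)) set"
    and hM :: "'m \<Rightarrow> real" and hN :: "'n \<Rightarrow> real"
    and f1 f2 :: "'m \<Rightarrow> 'n" and g1 g2 :: "'n \<Rightarrow> 'p" and r :: nat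
  assumes bmM: "banach_manifold AM" and bmN: "banach_manifold AN" and bmP: "banach_manifold AP"
    and shM: "smooth_fun AM hM" and rvM: "regular_value0 AM hM"
    and shN: "smooth_fun AN hN" and rvN: "regular_value0 AN hN"
    and r: "r \<ge> 1"
    and Cf1: "C1_map AM AN f1" and Cf2: "C1_map AM AN f2" and Cg1: "C1_map AN AP g1" and Cg2: "C1_map AN AP g2"
    and z1a: "\<forall>m. hM m = 0 \<longrightarrow> hN (f1 m) = 0"
    and z2a: "\<forall>m. hM m = 0 \<longrightarrow> hN (f2 m) = 0"
    and Of: "bigO hM r AN f2 f1"
    and Og: "bigO hN r AP g2 g1"
    and h0: "hM m0 = 0" and cV: "chart_of AN (V, \<mu>)" and inV: "f1 m0 \<in> V"
    and cW: "chart_of AP (W, \<psi>)" and inW: "g1 (f1 m0) \<in> W"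
  shows "\<exists>\<delta>. O_rep hM r (W, \<psi>) (g2 \<circ> f2) (g1 \<circ> f1) m0 \<delta> \<and>
     \<delta> m0 = (fdot AM hM hN f2 m0) ^ r *\<^sub>R res_rep hN r (W, \<psi>) g2 g1 (f1 m0)
         + frechet_derivative (\<psi> \<circ> g1 \<circ> inv_into V \<mu>) (at (\<mu> (f1 m0)))
             (res_rep hM r (V, \<mu>) f2 f1 m0)"
proof -
  have z1: "\<And>m. hM m = 0 \<Longrightarrow> hN (f1 m) = 0" using z1a by blast
  have z2: "\<And>m. hM m = 0 \<Longrightarrow> hN (f2 m) = 0" using z2a by blast
  define n0 where "n0 = f1 m0"
  have hN0: "hN n0 = 0" unfolding n0_def using z1[OF h0] .
  have feq: "\<And>m. hM m = 0 \<Longrightarrow> f2 m = f1 m" using Of unfolding bigO_def by blast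
  have geq: "\<And>n. hN n = 0 \<Longrightarrow> g2 n = g1 n" using Og unfolding bigO_def by blast
  have f2n: "f2 m0 = n0" unfolding n0_def using feq[OF h0] .
  have g2n: "g2 n0 = g1 n0" using geq[OF hN0] .
  have cf1: "isCont f1 m0" using C1_map_cont[OF Cf1] .
  have cf2: "isCont f2 m0" using C1_map_cont[OF Cf2] .
  have cg1: "\<And>n. isCont g1 n" using C1_map_cont[OF Cg1] .
  have cg2: "\<And>n. isCont g2 n" using C1_map_cont[OF Cg2] .
  obtain c0 \<delta>0 where c0: "chart_of AN c0" "f1 m0 \<in> fst c0" "O_rep hM r c0 f2 f1 m0 \<delta>0"
    using Of h0 unfolding bigO_def by blast
  obtain V0 \<mu>0 where c0e: "c0 = (V0, \<mu>0)" by (cases c0)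
  obtain \<delta>f where Odf: "O_rep hM r (V, \<mu>) f2 f1 m0 \<delta>f"
    using CC2[OF bmN c0(1)[unfolded c0e] cV r h0 c0(3)[unfolded c0e] inV cf1 cf2] by blast
  obtain d0 \<delta>0' where d0: "chart_of AP d0" "g1 n0 \<in> fst d0" "O_rep hN r d0 g2 g1 n0 \<delta>0'"
    using Og hN0 unfolding bigO_def by blast
  obtain W0 \<psi>0 where d0e: "d0 = (W0, \<psi>0)" by (cases d0)
  obtain \<delta>g where Odg: "O_rep hN r (W, \<psi>) g2 g1 n0 \<delta>g"
    using CC2[OF bmP d0(1)[unfolded d0e] cW r hN0 d0(3)[unfolded d0e] inW[folded n0_def] cg1 cg2] by blast
  have resf: "res_rep hM r (V, \<mu>) f2 f1 m0 = \<delta>f m0" by (rule res_rep_eq[OF NT[OF bmM shM rvM h0] Odf])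
  have resg: "res_rep hN r (W, \<psi>) g2 g1 n0 = \<delta>g n0" by (rule res_rep_eq[OF NT[OF bmN shN rvN hN0] Odg])
  have icV: "is_chart (V, \<mu>)" using chart_of_is_chart[OF cV] .
  have icW: "is_chart (W, \<psi>)" using chart_of_is_chart[OF cW] .
  have injV: "inj_on \<mu> V" using chart_D[OF icV] by simp
  have injW: "inj_on \<psi> W" using chart_D[OF icW] by simp
  obtain Vb \<nu> where cb: "(Vb, \<nu>) \<in> AN" "n0 \<in> Vb" using bm_chart[OF bmN] by blast
  obtain Wb \<psi>b where cbw: "(Wb, \<psi>b) \<in> AP" "g1 n0 \<in> Wb" using bm_chart[OF bmP] by blast
  have icVb: "is_chart (Vb, \<nu>)" using bm_is_chart[OF bmN cb(1)] .
  have icWb: "is_chart (Wb, \<psi>b)" using bm_is_chart[OF bmP cbw(1)] .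
  have injVb: "inj_on \<nu> Vb" using chart_D[OF icVb] by simp
  have injWb: "inj_on \<psi>b Wb" using chart_D[OF icWb] by simp
  define \<tau>1 where "\<tau>1 = \<nu> \<circ> inv_into V \<mu>"
  define G0 where "G0 = \<psi>b \<circ> g1 \<circ> inv_into Vb \<nu>"
  define \<tau>2 where "\<tau>2 = \<psi> \<circ> inv_into Wb \<psi>b"
  have s1: "smooth_on (\<mu> ` (V \<inter> Vb)) \<tau>1"
    using chart_of_compat[OF cV cb(1)] unfolding smooth_compat_def \<tau>1_def by simp
  have s3: "smooth_on (\<psi>b ` (W \<inter> Wb)) \<tau>2"
    using chart_of_compat[OF cW cbw(1)] unfolding smooth_compat_def \<tau>2_def by simp
  obtain \<tau>1' where C1: "C1x (\<mu> ` (V \<inter> Vb)) \<tau>1 \<tau>1'" using smooth_on_C1x'[OF s1] by blast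
  obtain G0' where C2: "C1x (\<nu> ` (Vb \<inter> g1 -` Wb)) G0 G0'"
    using C1_on_C1x[OF C1_map_D[OF Cg1 cb(1) cbw(1)]] unfolding G0_def by blast
  obtain \<tau>2' where C3: "C1x (\<psi>b ` (W \<inter> Wb)) \<tau>2 \<tau>2'" using smooth_on_C1x'[OF s3] by blast
  define y1 where "y1 = \<mu> n0"
  define y2 where "y2 = \<nu> n0"
  define y3 where "y3 = \<psi>b (g1 n0)"
  have n0V: "n0 \<in> V" using inV unfolding n0_def .
  have g1W: "g1 n0 \<in> W" using inW unfolding n0_def .
  have y1S: "y1 \<in> \<mu> ` (V \<inter> Vb)" unfolding y1_def using n0V cb(2) by blast
  have y2S: "y2 \<in> \<nu> ` (Vb \<inter> g1 -` Wb)" unfolding y2_def using cb(2) cbw(2) by blast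
  have y3S: "y3 \<in> \<psi>b ` (W \<inter> Wb)" unfolding y3_def using g1W cbw(2) by blast
  have t1y: "\<tau>1 y1 = y2" unfolding \<tau>1_def y1_def y2_def using inv_into_f_f[OF injV n0V] by simp
  have G0y: "G0 y2 = y3" unfolding G0_def y2_def y3_def using inv_into_f_f[OF injVb cb(2)] by simp
  have oVVb: "open (V \<inter> Vb)" using chart_D(1)[OF icV] chart_D(1)[OF icVb] by blast
  have oWWb: "open (W \<inter> Wb)" using chart_D(1)[OF icW] chart_D(1)[OF icWb] by blast
  have E1: "eventually (\<lambda>m. f1 m \<in> V \<inter> Vb) (nhds m0)"
    using ev_cont_open[OF cf1 oVVb] n0V cb(2) unfolding n0_def by simp
  have E2: "eventually (\<lambda>m. f2 m \<in> V \<inter> Vb) (nhds m0)"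
    using ev_cont_open[OF cf2 oVVb] n0V cb(2) f2n by simp
  have E3: "eventually (\<lambda>m. g1 (f1 m) \<in> W \<inter> Wb) (nhds m0)"
    using ev_cont_open[OF isCont_o2[OF cf1 cg1] oWWb] g1W cbw(2) unfolding n0_def by simp
  have E4: "eventually (\<lambda>m. g1 (f2 m) \<in> W \<inter> Wb) (nhds m0)"
    using ev_cont_open[OF isCont_o2[OF cf2 cg1] oWWb] g1W cbw(2) f2n by simp
  have E5: "eventually (\<lambda>m. g1 (f2 m) \<in> W \<and> g2 (f2 m) \<in> W \<and>
      \<psi> (g2 (f2 m)) - \<psi> (g1 (f2 m)) = hN (f2 m) ^ r *\<^sub>R \<delta>g (f2 m)) (nhds m0)"
    using ev_cont_comp[OF cf2, of "\<lambda>n. g1 n \<in> W \<and> g2 n \<in> W \<and> \<psi> (g2 n) - \<psi> (g1 n) = hN n ^ r *\<^sub>R \<delta>g n"]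
      O_rep_E(1)[OF Odg] f2n by simp
  have E6: "eventually (\<lambda>m. g2 (f2 m) \<in> W) (nhds m0)" using E5 by (rule eventually_mono) simp
  define P where "P m \<longleftrightarrow> f1 m \<in> V \<inter> Vb \<and> f2 m \<in> V \<inter> Vb \<and> g1 (f1 m) \<in> W \<inter> Wb \<and> g1 (f2 m) \<in> W \<inter> Wb \<and>
      \<psi> (g2 (f2 m)) - \<psi> (g1 (f2 m)) = hN (f2 m) ^ r *\<^sub>R \<delta>g (f2 m)" for m
  have EP: "eventually P (nhds m0)"
    unfolding P_def using eventually_conj[OF E1 eventually_conj[OF E2 eventually_conj[OF E3 eventually_conj[OF E4 E5]]]]
    by (rule eventually_mono) simp
  define F where "F = at m0 within {m. hM m \<noteq> 0}"
  have EF: "eventually (\<lambda>m. P m \<and> hM m \<noteq> 0) F"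
    unfolding F_def eventually_at_filter by (rule eventually_mono[OF EP]) simp
  define s where "s m = hM m ^ r" for m
  have ta1: "((\<lambda>m. \<mu> (f1 m)) \<longlongrightarrow> y1) F" unfolding F_def y1_def n0_def
    by (rule tendsto_within_subset[OF isCont_o2[OF cf1 chart_isCont[OF icV inV], unfolded continuous_at]]) simp
  have tb1: "((\<lambda>m. \<mu> (f2 m)) \<longlongrightarrow> y1) F" unfolding F_def y1_def
    using tendsto_within_subset[OF isCont_o2[OF cf2 chart_isCont[OF icV], unfolded continuous_at]] f2n n0V by simp
  have r1: "((\<lambda>m. (1 / s m) *\<^sub>R (\<mu> (f2 m) - \<mu> (f1 m))) \<longlongrightarrow> \<delta>f m0) F"
    using O_rep_ratio[OF Odf] unfolding F_def s_def .
  have r2a: "((\<lambda>m. (1 / s m) *\<^sub>R (\<tau>1 (\<mu> (f2 m)) - \<tau>1 (\<mu> (f1 m)))) \<longlongrightarrow> \<tau>1' y1 (\<delta>f m0)) F"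
    by (rule RL[OF C1 y1S ta1 tb1 r1])
  have r2: "((\<lambda>m. (1 / s m) *\<^sub>R (\<nu> (f2 m) - \<nu> (f1 m))) \<longlongrightarrow> \<tau>1' y1 (\<delta>f m0)) F"
    by (rule Lim_transform_eventually[OF r2a], rule eventually_mono[OF EF])
       (simp add: P_def \<tau>1_def inv_into_f_f[OF injV])
  have ta2: "((\<lambda>m. \<nu> (f1 m)) \<longlongrightarrow> y2) F" unfolding F_def y2_def n0_def
    by (rule tendsto_within_subset[OF isCont_o2[OF cf1 chart_isCont[OF icVb cb(2)[unfolded n0_def]], unfolded continuous_at]]) simp
  have tb2: "((\<lambda>m. \<nu> (f2 m)) \<longlongrightarrow> y2) F" unfolding F_def y2_def
    using tendsto_within_subset[OF isCont_o2[OF cf2 chart_isCont[OF icVb], unfolded continuous_at]] f2n cb(2) by simp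
  have r3a: "((\<lambda>m. (1 / s m) *\<^sub>R (G0 (\<nu> (f2 m)) - G0 (\<nu> (f1 m)))) \<longlongrightarrow> G0' y2 (\<tau>1' y1 (\<delta>f m0))) F"
    by (rule RL[OF C2 y2S ta2 tb2 r2])
  have r3: "((\<lambda>m. (1 / s m) *\<^sub>R (\<psi>b (g1 (f2 m)) - \<psi>b (g1 (f1 m)))) \<longlongrightarrow> G0' y2 (\<tau>1' y1 (\<delta>f m0))) F"
    by (rule Lim_transform_eventually[OF r3a], rule eventually_mono[OF EF])
       (simp add: P_def G0_def inv_into_f_f[OF injVb])
  have cpsib: "isCont \<psi>b (g1 n0)" using chart_isCont[OF icWb cbw(2)] .
  have ta3: "((\<lambda>m. \<psi>b (g1 (f1 m))) \<longlongrightarrow> y3) F" unfolding F_def y3_def n0_def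
    by (rule tendsto_within_subset[OF isCont_o2[OF isCont_o2[OF cf1 cg1] cpsib[unfolded n0_def], unfolded continuous_at]]) simp
  have tb3: "((\<lambda>m. \<psi>b (g1 (f2 m))) \<longlongrightarrow> y3) F" unfolding F_def y3_def
    using tendsto_within_subset[OF isCont_o2[OF isCont_o2[OF cf2 cg1] cpsib[folded f2n], unfolded continuous_at]] f2n by simp
  have r4a: "((\<lambda>m. (1 / s m) *\<^sub>R (\<tau>2 (\<psi>b (g1 (f2 m))) - \<tau>2 (\<psi>b (g1 (f1 m))))) \<longlongrightarrow> \<tau>2' y3 (G0' y2 (\<tau>1' y1 (\<delta>f m0)))) F"
    by (rule RL[OF C3 y3S ta3 tb3 r3])
  have rB: "((\<lambda>m. (1 / s m) *\<^sub>R (\<psi> (g1 (f2 m)) - \<psi> (g1 (f1 m)))) \<longlongrightarrow> \<tau>2' y3 (G0' y2 (\<tau>1' y1 (\<delta>f m0)))) F"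
    by (rule Lim_transform_eventually[OF r4a], rule eventually_mono[OF EF])
       (simp add: P_def \<tau>2_def inv_into_f_f[OF injWb])
  have fd: "((\<lambda>m. hN (f2 m) / hM m) \<longlongrightarrow> fdot AM hM hN f2 m0) F"
    unfolding F_def by (rule FDOT[OF bmM bmN shM rvM shN Cf2 z2 h0])
  have cdg: "isCont \<delta>g n0" using Odg unfolding O_rep_def by simp
  have tdg: "((\<lambda>m. \<delta>g (f2 m)) \<longlongrightarrow> \<delta>g n0) F" unfolding F_def
    using tendsto_within_subset[OF isCont_o2[OF cf2 cdg[folded f2n], unfolded continuous_at]] f2n by simp
  have rAa: "((\<lambda>m. (hN (f2 m) / hM m) ^ r *\<^sub>R \<delta>g (f2 m)) \<longlongrightarrow> fdot AM hM hN f2 m0 ^ r *\<^sub>R \<delta>g n0) F"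
    by (rule tendsto_scaleR[OF tendsto_power[OF fd] tdg])
  have rA: "((\<lambda>m. (1 / s m) *\<^sub>R (\<psi> (g2 (f2 m)) - \<psi> (g1 (f2 m)))) \<longlongrightarrow> fdot AM hM hN f2 m0 ^ r *\<^sub>R \<delta>g n0) F"
    by (rule Lim_transform_eventually[OF rAa], rule eventually_mono[OF EF])
       (simp add: P_def s_def power_divide)
  have rT: "((\<lambda>m. (1 / hM m ^ r) *\<^sub>R (\<psi> ((g2 \<circ> f2) m) - \<psi> ((g1 \<circ> f1) m))) \<longlongrightarrow>
      fdot AM hM hN f2 m0 ^ r *\<^sub>R \<delta>g n0 + \<tau>2' y3 (G0' y2 (\<tau>1' y1 (\<delta>f m0)))) (at m0 within {m. hM m \<noteq> 0})"
    using tendsto_add[OF rA rB] unfolding F_def s_def by (simp add: scaleR_diff_right algebra_simps)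
  define Oset where "Oset = \<mu> ` (V \<inter> (Vb \<inter> g1 -` (W \<inter> Wb)))"
  have oO: "open Oset" unfolding Oset_def
    by (rule chart_open_img[OF icV]) (use chart_D(1)[OF icVb] C1_map_open_vimage[OF Cg1 oWWb] in blast)
  have y1O: "y1 \<in> Oset" unfolding Oset_def y1_def using n0V cb(2) g1W cbw(2) by blast
  have compeq: "(\<tau>2 \<circ> (G0 \<circ> \<tau>1)) y = (\<psi> \<circ> g1 \<circ> inv_into V \<mu>) y" if yO: "y \<in> Oset" for y
  proof -
    obtain m' where m': "m' \<in> V" "m' \<in> Vb" "g1 m' \<in> W" "g1 m' \<in> Wb" "y = \<mu> m'" using yO unfolding Oset_def by blast
    show ?thesis unfolding \<tau>1_def \<tau>2_def G0_def using m'
      by (simp add: inv_into_f_f[OF injV] inv_into_f_f[OF injVb] inv_into_f_f[OF injWb])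
  qed
  have d1: "(\<tau>1 has_derivative \<tau>1' y1) (at y1)" using C1x_der[OF C1 y1S] .
  have d2: "(G0 has_derivative G0' y2) (at (\<tau>1 y1))" using C1x_der[OF C2 y2S] t1y by simp
  have d3: "(\<tau>2 has_derivative \<tau>2' y3) (at ((G0 \<circ> \<tau>1) y1))" using C1x_der[OF C3 y3S] t1y G0y by simp
  have dc: "((\<tau>2 \<circ> (G0 \<circ> \<tau>1)) has_derivative (\<tau>2' y3 \<circ> (G0' y2 \<circ> \<tau>1' y1))) (at y1)"
    by (rule diff_chain_at[OF diff_chain_at[OF d1 d2] d3])
  have dG: "((\<psi> \<circ> g1 \<circ> inv_into V \<mu>) has_derivative (\<tau>2' y3 \<circ> (G0' y2 \<circ> \<tau>1' y1))) (at y1)"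
    by (rule has_derivative_transform_within_open[OF dc oO y1O compeq])
  have DG: "frechet_derivative (\<psi> \<circ> g1 \<circ> inv_into V \<mu>) (at (\<mu> (f1 m0))) = \<tau>2' y3 \<circ> (G0' y2 \<circ> \<tau>1' y1)"
    using frechet_derivative_at[OF dG] unfolding y1_def n0_def by simp
  have EV: "eventually (\<lambda>m. (g1 \<circ> f1) m \<in> W \<and> (g2 \<circ> f2) m \<in> W \<and>
      (hM m = 0 \<longrightarrow> \<psi> ((g2 \<circ> f2) m) = \<psi> ((g1 \<circ> f1) m))) (nhds m0)"
  proof -
    have "eventually (\<lambda>m. g1 (f1 m) \<in> W \<inter> Wb \<and> g2 (f2 m) \<in> W) (nhds m0)"
      using eventually_conj[OF E3 E6] .
    then show ?thesis
    proof (rule eventually_mono)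
      fix m assume a: "g1 (f1 m) \<in> W \<inter> Wb \<and> g2 (f2 m) \<in> W"
      have "hM m = 0 \<longrightarrow> g2 (f2 m) = g1 (f1 m)" using feq geq z1 by metis
      then show "(g1 \<circ> f1) m \<in> W \<and> (g2 \<circ> f2) m \<in> W \<and> (hM m = 0 \<longrightarrow> \<psi> ((g2 \<circ> f2) m) = \<psi> ((g1 \<circ> f1) m))"
        using a by auto
    qed
  qed
  have "O_rep hM r (W, \<psi>) (g2 \<circ> f2) (g1 \<circ> f1) m0
     (\<lambda>m. if hM m = 0 then fdot AM hM hN f2 m0 ^ r *\<^sub>R \<delta>g n0 + \<tau>2' y3 (G0' y2 (\<tau>1' y1 (\<delta>f m0)))
          else (1 / hM m ^ r) *\<^sub>R (\<psi> ((g2 \<circ> f2) m) - \<psi> ((g1 \<circ> f1) m)))"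
    by (rule mk_O_rep[OF r h0 EV rT])
  then show ?thesis using h0 resf resg DG unfolding n0_def by fastforce
qed



theorem proposition3p7:
  fixes AM :: "('m::t2_space set \<times> ('m \<Rightarrow> 'e::banach)) set"
    and AN :: "('n::t2_space set \<times> ('n \<Rightarrow> 'f::banach)) set"
    and AP :: "('p::t2_space set \<times> ('p \<Rightarrow> 'g::banach)) set"
    and hM :: "'m \<Rightarrow> real" and hN :: "'n \<Rightarrow> real"
    and f1 f2 :: "'m \<Rightarrow> 'n" and g1 g2 :: "'n \<Rightarrow> 'p" and r :: nat
  assumes "banach_manifold AM" "banach_manifold AN" "banach_manifold AP"
    and "smooth_fun AM hM" "regular_value0 AM hM"
    and "smooth_fun AN hN" "regular_value0 AN hN"
    and "r \<ge> 1"
    and "C1_map AM AN f1" "C1_map AM AN f2" "C1_map AN AP g1" "C1_map AN AP g2"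
    and "\<And>m. hM m = 0 \<Longrightarrow> hN (f1 m) = 0"
    and "\<And>m. hM m = 0 \<Longrightarrow> hN (f2 m) = 0"
    and "bigO hM r AN f2 f1"
    and "bigO hN r AP g2 g1"
  shows "bigO hM r AP (g2 \<circ> f2) (g1 \<circ> f1) \<and>
    (\<forall>m V \<mu> W \<psi>. hM m = 0 \<longrightarrow> chart_of AN (V, \<mu>) \<longrightarrow> f1 m \<in> V \<longrightarrow>
       chart_of AP (W, \<psi>) \<longrightarrow> g1 (f1 m) \<in> W \<longrightarrow>
       res_rep hM r (W, \<psi>) (g2 \<circ> f2) (g1 \<circ> f1) m =
         (fdot AM hM hN f2 m) ^ r *\<^sub>R res_rep hN r (W, \<psi>) g2 g1 (f1 m)
         + frechet_derivative (\<psi> \<circ> g1 \<circ> inv_into V \<mu>) (at (\<mu> (f1 m)))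
             (res_rep hM r (V, \<mu>) f2 f1 m))"
proof -
  note A = assms
  have z1a: "\<forall>m. hM m = 0 \<longrightarrow> hN (f1 m) = 0" using A(13) by blast
  have z2a: "\<forall>m. hM m = 0 \<longrightarrow> hN (f2 m) = 0" using A(14) by blast
  note M = MAIN[OF A(1) A(2) A(3) A(4) A(5) A(6) A(7) A(8) A(9) A(10) A(11) A(12) z1a z2a A(15) A(16)]
  have feq: "\<And>m. hM m = 0 \<Longrightarrow> f2 m = f1 m" using A(15) unfolding bigO_def by blast
  have geq: "\<And>n. hN n = 0 \<Longrightarrow> g2 n = g1 n" using A(16) unfolding bigO_def by blast
  have P1: "bigO hM r AP (g2 \<circ> f2) (g1 \<circ> f1)"
    unfolding bigO_def
  proof (intro conjI allI impI)
    fix m assume "hM m = 0"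
    then show "(g2 \<circ> f2) m = (g1 \<circ> f1) m" using feq geq A(13) by simp
  next
    fix m0 assume h0: "hM m0 = 0"
    obtain c0 \<delta>0 where c0: "chart_of AN c0" "f1 m0 \<in> fst c0" "O_rep hM r c0 f2 f1 m0 \<delta>0"
      using A(15) h0 unfolding bigO_def by blast
    obtain V \<mu> where c0e: "c0 = (V, \<mu>)" by (cases c0)
    have hN0: "hN (f1 m0) = 0" using A(13)[OF h0] .
    obtain d0 \<delta>0' where d0: "chart_of AP d0" "g1 (f1 m0) \<in> fst d0" "O_rep hN r d0 g2 g1 (f1 m0) \<delta>0'"
      using A(16) hN0 unfolding bigO_def by blast
    obtain W \<psi> where d0e: "d0 = (W, \<psi>)" by (cases d0)
    obtain \<delta> where "O_rep hM r (W, \<psi>) (g2 \<circ> f2) (g1 \<circ> f1) m0 \<delta>"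
      using M[OF h0 c0(1)[unfolded c0e] _ d0(1)[unfolded d0e]] c0(2) d0(2) c0e d0e by auto
    then show "\<exists>c \<delta>. chart_of AP c \<and> (g1 \<circ> f1) m0 \<in> fst c \<and> O_rep hM r c (g2 \<circ> f2) (g1 \<circ> f1) m0 \<delta>"
      using d0 d0e by auto
  qed
  have P2: "\<forall>m V \<mu> W \<psi>. hM m = 0 \<longrightarrow> chart_of AN (V, \<mu>) \<longrightarrow> f1 m \<in> V \<longrightarrow>
       chart_of AP (W, \<psi>) \<longrightarrow> g1 (f1 m) \<in> W \<longrightarrow>
       res_rep hM r (W, \<psi>) (g2 \<circ> f2) (g1 \<circ> f1) m =
         (fdot AM hM hN f2 m) ^ r *\<^sub>R res_rep hN r (W, \<psi>) g2 g1 (f1 m)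
         + frechet_derivative (\<psi> \<circ> g1 \<circ> inv_into V \<mu>) (at (\<mu> (f1 m)))
             (res_rep hM r (V, \<mu>) f2 f1 m)"
  proof (intro allI impI)
    fix m V \<mu> W \<psi>
    assume h0: "hM m = 0" and cV: "chart_of AN (V, \<mu>)" and inV: "f1 m \<in> V"
      and cW: "chart_of AP (W, \<psi>)" and inW: "g1 (f1 m) \<in> W"
    obtain \<delta> where d: "O_rep hM r (W, \<psi>) (g2 \<circ> f2) (g1 \<circ> f1) m \<delta>"
      "\<delta> m = (fdot AM hM hN f2 m) ^ r *\<^sub>R res_rep hN r (W, \<psi>) g2 g1 (f1 m)
         + frechet_derivative (\<psi> \<circ> g1 \<circ> inv_into V \<mu>) (at (\<mu> (f1 m)))
             (res_rep hM r (V, \<mu>) f2 f1 m)"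
      using M[OF h0 cV inV cW inW] by blast
    show "res_rep hM r (W, \<psi>) (g2 \<circ> f2) (g1 \<circ> f1) m =
         (fdot AM hM hN f2 m) ^ r *\<^sub>R res_rep hN r (W, \<psi>) g2 g1 (f1 m)
         + frechet_derivative (\<psi> \<circ> g1 \<circ> inv_into V \<mu>) (at (\<mu> (f1 m)))
             (res_rep hM r (V, \<mu>) f2 f1 m)"
      using res_rep_eq[OF NT[OF A(1) A(4) A(5) h0] d(1)] d(2) by simp
  qed
  show ?thesis using P1 P2 by blast
qed


end
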